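(* Let $\psi\in\Psi$ satisfy $\lim_{t\to\infty}\frac{\psi(t\psi(t))}{\psi(t)}=1$ and let $\tau_\omega$ be a Connes–Dixmier trace on $M_\psi$. Then for every positive $x\in M_\psi$, $$\tau_\omega(x)=\omega\Big(t\mapsto\frac{-1}{\psi(t)}\int_{1/t}^\infty\lambda\,dn_x(\lambda)\Big).$$
   Context: $\Psi$ is the class of concave increasing functions $\psi$ on $[0,\infty)$ with $\psi(\infty)=\infty$, $\psi(t)=O(t)$ as $t\to0$, $\psi(t)=o(t)$ as $t\to\infty$. For bounded measurable $x$ on $(0,\infty)$, $n_x(\lambda)=m(\{s:|x(s)|>\lambda\})$, $x^*$ is the nonincreasing right-continuous rearrangement of $|x|$, and $-\int_z^\infty\lambda\,dn_x(\lambda)=\int_0^{n_x(z)}x^*(s)ds$. $M_\psi$ is the space of bounded measurable $x$ with $\|x\|_{M_\psi}=\sup_{t>0}\frac1{\psi(t)}\int_0^tx^*(s)ds<\infty$. A generalised limit on $L_\infty(0,\infty)$ is a positive linear functional $\gamma$ with $\gamma(1)=1$ and $\gamma(y)=0$ whenever $y(t)\to0$. With $(My)(t)=\frac1{\log t}\int_1^t\frac{y(s)}sds$, a Connes–Dixmier trace on $M_\psi$ is $\tau_\omega(x)=\omega(t\mapsto\frac1{\psi(t)}\int_0^tx^*(s)ds)$, $0\le x\in M_\psi$, where $\omega=\gamma\circ M$ for a generalised limit $\gamma$ (such $\omega$ is a dilation invariant generalised limit and $\tau_\omega$ is additive on the positive cone). Values of functions of $t$ on a bounded initial interval do not affect $\omega$.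 *)

theory Defs
  imports "HOL-Analysis.Analysis" "HOL-Library.Landau_Symbols"
begin

definition Psi_class :: "(real \<Rightarrow> real) set" where
  "Psi_class = {\<psi>. concave_on {0..} \<psi> \<and> mono_on {0..} \<psi> \<and>
      filterlim \<psi> at_top at_top \<and>
      \<psi> \<in> O[at_right 0](\<lambda>t. t) \<and> \<psi> \<in> o[at_top](\<lambda>t. t)}"

text \<open>Bounded measurable functions on (0,infinity) (values at s <= 0 are ignored).\<close>
definition bdd_meas :: "(real \<Rightarrow> real) \<Rightarrow> bool" where
  "bdd_meas x \<longleftrightarrow> x \<in> borel_measurable lborel \<and> (\<exists>C. \<forall>s>0. \<bar>x s\<bar> \<le> C)"

definition distfun :: "(real \<Rightarrow> real) \<Rightarrow> real \<Rightarrow> ennreal" where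
  "distfun x l = emeasure lborel {s. 0 < s \<and> \<bar>x s\<bar> > l}"

definition rearr :: "(real \<Rightarrow> real) \<Rightarrow> real \<Rightarrow> real" where
  "rearr x t = Inf {l. 0 \<le> l \<and> distfun x l \<le> ennreal t}"

text \<open>The Lebesgue--Stieltjes quantity  - \<integral>_z^\<infinity> \<lambda> dn_x(\<lambda>)  (for z > 0):
  the measure -dn_x on (z,infinity) is the Lebesgue--Stieltjes measure of the
  nondecreasing right-continuous function \<lambda> \<mapsto> - n_x(max \<lambda> z).\<close>
definition stieltjes_tail :: "(real \<Rightarrow> real) \<Rightarrow> real \<Rightarrow> real" where
  "stieltjes_tail x z = enn2real (\<integral>\<^sup>+ u. ennreal u * indicator {z<..} u
       \<partial>interval_measure (\<lambda>l. - enn2real (distfun x (max l z))))"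

definition M_psi :: "(real \<Rightarrow> real) \<Rightarrow> (real \<Rightarrow> real) set" where
  "M_psi \<psi> = {x. bdd_meas x \<and>
      (\<exists>C. \<forall>t>0. (LBINT s:{0..t}. rearr x s) / \<psi> t \<le> C)}"

definition Linf :: "(real \<Rightarrow> real) set" where
  "Linf = {y. y \<in> borel_measurable lborel \<and> (\<exists>C. AE s in lborel. 0 < s \<longrightarrow> \<bar>y s\<bar> \<le> C)}"

definition gen_limit :: "((real \<Rightarrow> real) \<Rightarrow> real) \<Rightarrow> bool" where
  "gen_limit \<gamma> \<longleftrightarrow>
     (\<forall>y\<in>Linf. \<forall>z\<in>Linf. \<forall>a b. \<gamma> (\<lambda>t. a * y t + b * z t) = a * \<gamma> y + b * \<gamma> z) \<and>
     (\<forall>y\<in>Linf. (AE s in lborel. 0 < s \<longrightarrow> 0 \<le> y s) \<longrightarrow> 0 \<le> \<gamma> y) \<and>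
     \<gamma> (\<lambda>_. 1) = 1 \<and>
     (\<forall>y\<in>Linf. (y \<longlongrightarrow> 0) at_top \<longrightarrow> \<gamma> y = 0)"

text \<open>(My)(t) = (1/log t) \<integral>_1^t y(s)/s ds, for t > 1 (irrelevant elsewhere).\<close>
definition Mop :: "(real \<Rightarrow> real) \<Rightarrow> real \<Rightarrow> real" where
  "Mop y t = (if 1 < t then (LBINT s:{1..t}. y s / s) / ln t else 0)"

text \<open>Connes--Dixmier trace tau_omega with omega = gamma o M.\<close>
definition CD_trace :: "((real \<Rightarrow> real) \<Rightarrow> real) \<Rightarrow> (real \<Rightarrow> real) \<Rightarrow> (real \<Rightarrow> real) \<Rightarrow> real" where
  "CD_trace \<omega> \<psi> x = \<omega> (\<lambda>t. (LBINT s:{0..t}. rearr x s) / \<psi> t)"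

end

theory Submission
  imports Defs
begin


locale psi_loc =
  fixes \<psi> :: "real \<Rightarrow> real"
  assumes psi: "\<psi> \<in> Psi_class"
    and hyp: "((\<lambda>t. \<psi> (t * \<psi> t) / \<psi> t) \<longlongrightarrow> 1) at_top"
begin

lemma conc: "concave_on {0..} \<psi>" and mon: "mono_on {0..} \<psi>"
  and top: "filterlim \<psi> at_top at_top"
  and bo: "\<psi> \<in> O[at_right 0](\<lambda>t. t)" and so: "\<psi> \<in> o[at_top](\<lambda>t. t)"
  using psi by (auto simp: Psi_class_def)

lemma psi_mono: "0 \<le> a \<Longrightarrow> a \<le> b \<Longrightarrow> \<psi> a \<le> \<psi> b"
  using mon by (auto simp: mono_on_def)

lemma psi_nonneg: assumes "0 < t" shows "0 \<le> \<psi> t"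
proof (rule ccontr)
  assume "\<not> 0 \<le> \<psi> t"
  hence neg: "\<psi> t < 0" by simp
  from bo obtain c where c: "c > 0" "eventually (\<lambda>x. norm (\<psi> x) \<le> c * norm x) (at_right 0)"
    by (auto simp: bigo_def)
  then obtain d where d: "d > 0" "\<And>x. 0 < x \<Longrightarrow> x < d \<Longrightarrow> \<bar>\<psi> x\<bar> \<le> c * \<bar>x\<bar>"
    by (auto simp: eventually_at_right_field)
  define e where "e = min (t/2) (min (d/2) (- \<psi> t / (2*c)))"
  have "\<psi> t / (2 * c) < 0" using c neg by (simp add: divide_neg_pos)
  hence e1: "0 < e" using c d neg assms by (simp add: e_def)
  have e2: "e < d" "e \<le> t" using d assms by (auto simp: e_def)
  have "e \<le> - \<psi> t / (2*c)" by (simp add: e_def)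
  hence "c * e \<le> c * (- \<psi> t / (2*c))" using c by (intro mult_left_mono) auto
  hence "c * e < - \<psi> t" using c neg by simp
  note e = e1 e2 this
  have "\<bar>\<psi> e\<bar> \<le> c * e" using d(2)[of e] e by simp
  moreover have "\<psi> e \<le> \<psi> t" using psi_mono[of e t] e by simp
  ultimately show False using e by linarith
qed

lemma psi_ratio: assumes "0 < a" "a \<le> b" shows "a * \<psi> b \<le> b * \<psi> a"
proof (rule ccontr)
  assume "\<not> ?thesis"
  hence gt: "a * \<psi> b > b * \<psi> a" by simp
  have pb: "\<psi> b \<ge> 0" using psi_nonneg assms by simp
  have ab: "a < b" using gt assms by (cases "a = b") auto
  \<comment> \<open>concavity between e and b, with e small\<close>
  define D where "D = a * \<psi> b - b * \<psi> a"
  have D: "D > 0" using gt by (simp add: D_def)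
  define e where "e = min (a/2) (D / (2 * (\<psi> b + 1)))"
  have e1: "0 < e" "e < a" using assms D pb by (auto simp: e_def)
  have "e \<le> D / (2 * (\<psi> b + 1))" by (simp add: e_def)
  hence "e * \<psi> b \<le> D / (2 * (\<psi> b + 1)) * \<psi> b" using pb by (rule mult_right_mono)
  also have "\<dots> < D" 
  proof -
    have "D * \<psi> b \<ge> 0" using D pb by simp
    hence "0 < D * \<psi> b + D * 2" using D by linarith
    thus ?thesis using D pb by (simp add: field_simps)
  qed
  finally have "e * \<psi> b < D" .
  note e = e1 this
  define u where "u = (a - e) / (b - e)"
  have u: "0 \<le> u" "u \<le> 1" using e ab by (auto simp: u_def field_simps)
  have be: "b - e \<noteq> 0" using e ab by simp
  have "u * (b - e) = a - e" using be by (simp add: u_def)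
  hence "(1 - u) *\<^sub>R e + u *\<^sub>R b = a" by (simp add: algebra_simps)
  hence "\<psi> a \<ge> (1 - u) * \<psi> e + u * \<psi> b"
    using concave_onD[OF conc u, of e b] e assms by auto
  moreover have "(1 - u) * \<psi> e \<ge> 0" using u psi_nonneg[of e] e by simp
  ultimately have "\<psi> a \<ge> u * \<psi> b" by linarith
  hence "(b - e) * \<psi> a \<ge> (a - e) * \<psi> b" using e ab by (simp add: u_def field_simps)
  hence "b * \<psi> a \<ge> a * \<psi> b - e * \<psi> b + e * \<psi> a" by (simp add: algebra_simps)
  moreover have "e * \<psi> a \<ge> 0" using e psi_nonneg[of a] assms by simp
  ultimately show False using e D by (simp add: D_def)
qed

lemma psi_pos: assumes "0 < t" shows "0 < \<psi> t"
proof (rule ccontr)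
  assume "\<not> ?thesis"
  hence z: "\<psi> t = 0" using psi_nonneg[OF assms] by simp
  have "\<forall>b\<ge>t. \<psi> b \<le> 0"
  proof (intro allI impI)
    fix b assume "t \<le> b"
    from psi_ratio[OF assms this] z assms show "\<psi> b \<le> 0" by (simp add: mult_le_0_iff)
  qed
  moreover have "eventually (\<lambda>b. \<psi> b > 0) at_top" using top by (simp add: filterlim_at_top_dense)
  then obtain N where N: "\<And>b. b \<ge> N \<Longrightarrow> \<psi> b > 0" by (auto simp: eventually_at_top_linorder)
  have "\<psi> (max N t) > 0" "max N t \<ge> t" using N by auto
  ultimately show False by (meson not_le)
qed

lemma ev_pos: "eventually (\<lambda>t. \<psi> t \<ge> K) at_top"
  using top by (simp add: filterlim_at_top)

lemma psi_dil: assumes K: "K \<ge> 1" shows "((\<lambda>t. \<psi> (K * t) / \<psi> t) \<longlongrightarrow> 1) at_top"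
proof (rule tendsto_sandwich[OF _ _ tendsto_const hyp])
  show "\<forall>\<^sub>F t in at_top. 1 \<le> \<psi> (K * t) / \<psi> t"
    using eventually_gt_at_top[of 0]
  proof eventually_elim
    case (elim t)
    have "\<psi> t \<le> \<psi> (K * t)" using K elim by (intro psi_mono) auto
    thus ?case using psi_pos[OF elim] by simp
  qed
  show "\<forall>\<^sub>F t in at_top. \<psi> (K * t) / \<psi> t \<le> \<psi> (t * \<psi> t) / \<psi> t"
    using eventually_gt_at_top[of 0] ev_pos[of K]
  proof eventually_elim
    case (elim t)
    have "\<psi> (K * t) \<le> \<psi> (t * \<psi> t)" using K elim
      by (intro psi_mono) (auto simp: mult.commute mult_right_mono)
    thus ?case using psi_pos[OF elim(1)] by (simp add: divide_right_mono)
  qed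
qed

lemma lin_top: "K > 0 \<Longrightarrow> filterlim (\<lambda>t::real. K * t) at_top at_top"
  by (rule filterlim_tendsto_pos_mult_at_top[OF tendsto_const]) (auto simp: filterlim_ident)

lemma psi_dil2: assumes K: "K \<ge> 1"
  shows "((\<lambda>t. \<psi> (K * t * \<psi> (K * t)) / \<psi> t) \<longlongrightarrow> 1) at_top"
proof -
  have h1: "((\<lambda>t. \<psi> (K * t * \<psi> (K * t)) / \<psi> (K * t)) \<longlongrightarrow> 1) at_top"
    using filterlim_compose[OF hyp lin_top[of K]] K by simp
  have lim: "((\<lambda>t. (\<psi> (K * t * \<psi> (K * t)) / \<psi> (K * t)) * (\<psi> (K * t) / \<psi> t)) \<longlongrightarrow> 1) at_top"
    using tendsto_mult[OF h1 psi_dil[OF K]] by simp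
  have ev: "eventually (\<lambda>t. (\<psi> (K * t * \<psi> (K * t)) / \<psi> (K * t)) * (\<psi> (K * t) / \<psi> t)
      = \<psi> (K * t * \<psi> (K * t)) / \<psi> t) at_top"
    using eventually_gt_at_top[of 0]
  proof eventually_elim
    case (elim t)
    have "\<psi> (K * t) > 0" using K elim by (intro psi_pos) simp
    thus ?case by simp
  qed
  show ?thesis by (rule Lim_transform_eventually[OF lim ev])
qed

lemma psi_log: "((\<lambda>t. ln (\<psi> t) / ln t) \<longlongrightarrow> 0) at_top"
proof (rule tendstoI)
  fix e :: real assume "e > 0"
  define \<epsilon> where "\<epsilon> = e / 2"
  have \<epsilon>: "\<epsilon> > 0" using \<open>e > 0\<close> by (simp add: \<epsilon>_def)
  define M where "M = exp (2 * ln 2 / \<epsilon>)"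
  have lnM: "ln M = 2 * ln 2 / \<epsilon>" by (simp add: M_def)
  have M1: "M > 1" using \<epsilon> by (simp add: M_def)
  have "eventually (\<lambda>t. \<psi> (t * \<psi> t) / \<psi> t < 2) at_top"
    using hyp by (rule order_tendstoD) simp
  hence "eventually (\<lambda>t. \<psi> (t * \<psi> t) / \<psi> t < 2 \<and> \<psi> t \<ge> M) at_top"
    using ev_pos[of M] by (rule eventually_conj)
  then obtain t0 where t0: "\<And>t. t \<ge> t0 \<Longrightarrow> \<psi> (t * \<psi> t) / \<psi> t < 2 \<and> \<psi> t \<ge> M"
    by (auto simp: eventually_at_top_linorder)
  define t1 where "t1 = max 1 t0"
  have t1: "t1 \<ge> 1" "t1 \<ge> t0" by (auto simp: t1_def)
  have step: "\<psi> (M * t) \<le> 2 * \<psi> t" if "t \<ge> t1" for t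
  proof -
    have tp: "t > 0" using that t1 by simp
    have "\<psi> (M * t) \<le> \<psi> (t * \<psi> t)" using t0[of t] that t1 tp M1
      by (intro psi_mono) (auto simp: mult.commute mult_right_mono)
    also have "\<dots> \<le> 2 * \<psi> t" using t0[of t] that t1 psi_pos[OF tp] by (simp add: field_simps)
    finally show ?thesis .
  qed
  have ind: "\<forall>t. t1 \<le> t \<and> t \<le> t1 * M ^ (k + 1) \<longrightarrow> \<psi> t \<le> 2 ^ k * \<psi> (t1 * M)" for k :: nat
  proof (induction k)
    case 0
    then show ?case using t1 by (auto intro: psi_mono)
  next
    case (Suc k)
    show ?case
    proof (intro allI impI)
      fix t assume t: "t1 \<le> t \<and> t \<le> t1 * M ^ (Suc k + 1)"
      have p0: "\<psi> (t1 * M) > 0" using t1 M1 by (intro psi_pos) simp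
      show "\<psi> t \<le> 2 ^ Suc k * \<psi> (t1 * M)"
      proof (cases "t \<le> t1 * M ^ (k + 1)")
        case True
        hence "\<psi> t \<le> 2 ^ k * \<psi> (t1 * M)" using Suc t by blast
        also have "\<dots> \<le> 2 ^ Suc k * \<psi> (t1 * M)" using p0 by simp
        finally show ?thesis .
      next
        case False
        define s where "s = t / M"
        have sM: "M * s = t" using M1 by (simp add: s_def)
        have pw: "1 \<le> M ^ (k+1)" by (rule one_le_power) (use M1 in simp)
        have "t1 * 1 \<le> t1 * M ^ (k+1)" by (rule mult_left_mono) (use pw t1 in auto)
        hence "t1 * M ^ (k+1) \<ge> t1" by simp
        have pk: "1 \<le> M ^ k" by (rule one_le_power) (use M1 in simp)
        have "t1 * M * 1 \<le> t1 * M * M ^ k" by (rule mult_left_mono) (use pk t1 M1 in auto)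
        hence "t1 * M \<le> t" using False by (simp add: algebra_simps)
        hence s1: "t1 \<le> s" using M1 by (simp add: s_def field_simps)
        have "t1 * M ^ (k + 1) * M \<le> t1 * M ^ (k + 1) * M ^ 1" by simp
        have s2: "s \<le> t1 * M ^ (k + 1)" using t M1 by (simp add: s_def field_simps)
        have "\<psi> t \<le> 2 * \<psi> s" using step[OF s1] sM by simp
        also have "\<dots> \<le> 2 * (2 ^ k * \<psi> (t1 * M))" using Suc s1 s2 by auto
        finally show ?thesis by simp
      qed
    qed
  qed
  define c where "c = ln (\<psi> (t1 * M))"
  have bound: "ln (\<psi> t) \<le> \<epsilon> / 2 * ln t + c" if t: "t \<ge> t1" for t
  proof -
    define k where "k = nat \<lfloor>ln (t / t1) / ln M\<rfloor>"
    have lnM0: "ln M > 0" using M1 by simp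
    have q0: "ln (t / t1) / ln M \<ge> 0" using t t1 lnM0 by simp
    have kle: "real k \<le> ln (t / t1) / ln M" using q0 by (simp add: k_def)
    have kgt: "ln (t / t1) / ln M < real k + 1" using q0 by (simp add: k_def)
    hence "ln (t / t1) < (real k + 1) * ln M" using lnM0 by (simp add: field_simps)
    also have "\<dots> = ln (M ^ (k + 1))" using M1 by (subst ln_realpow) auto
    finally have "t / t1 < M ^ (k + 1)" using t t1 M1 by (subst (asm) ln_less_cancel_iff) auto
    hence tle: "t \<le> t1 * M ^ (k + 1)" using t1 by (simp add: field_simps)
    have pt: "\<psi> t > 0" using t t1 by (intro psi_pos) simp
    have p0: "\<psi> (t1 * M) > 0" using t1 M1 by (intro psi_pos) simp
    have "ln (\<psi> t) \<le> ln (2 ^ k * \<psi> (t1 * M))"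
      using ind[of k] t tle pt p0 by (subst ln_le_cancel_iff) auto
    also have "\<dots> = real k * ln 2 + c" using p0 by (simp add: ln_mult ln_realpow c_def)
    also have "real k * ln 2 \<le> ln (t / t1) / ln M * ln 2" using mult_right_mono[OF kle, of "ln 2"] by simp
    also have "ln (t / t1) / ln M * ln 2 = \<epsilon> / 2 * ln (t / t1)" unfolding lnM using \<epsilon> by (simp add: field_simps)
    also have "ln (t / t1) = ln t - ln t1" using t t1 by (simp add: ln_div)
    also have "\<epsilon> / 2 * (ln t - ln t1) \<le> \<epsilon> / 2 * ln t" using t1 \<epsilon> by simp
    finally show ?thesis by simp
  qed
  have ev: "eventually (\<lambda>t. t \<ge> t1 \<and> ln t > 0 \<and> \<bar>c\<bar> \<le> \<epsilon> / 2 * ln t) at_top"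
  proof -
    have "filterlim (\<lambda>t. \<epsilon> / 2 * ln t) at_top at_top"
      using \<epsilon> by (intro filterlim_tendsto_pos_mult_at_top[OF tendsto_const] ln_at_top) auto
    hence "eventually (\<lambda>t. \<bar>c\<bar> \<le> \<epsilon> / 2 * ln t) at_top" by (simp add: filterlim_at_top)
    moreover have "eventually (\<lambda>t. ln t > (0::real)) at_top"
      using ln_at_top by (simp add: filterlim_at_top_dense)
    ultimately show ?thesis using eventually_ge_at_top[of t1] by eventually_elim auto
  qed
  show "eventually (\<lambda>t. dist (ln (\<psi> t) / ln t) 0 < e) at_top"
    using ev
  proof eventually_elim
    case (elim t)
    have "\<psi> t \<ge> M" using t0[of t] elim t1 by auto
    hence "ln (\<psi> t) \<ge> 0" using M1 by simp
    moreover have "ln (\<psi> t) \<le> \<epsilon> * ln t"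
    proof -
      have "ln (\<psi> t) \<le> \<epsilon> / 2 * ln t + c" using bound[of t] elim by blast
      moreover have "c \<le> \<epsilon> / 2 * ln t" using elim by linarith
      ultimately have "ln (\<psi> t) \<le> \<epsilon> / 2 * ln t + \<epsilon> / 2 * ln t" by linarith
      thus ?thesis by (simp add: field_simps)
    qed
    ultimately have "\<bar>ln (\<psi> t) / ln t\<bar> \<le> \<epsilon>" using elim by (simp add: field_simps abs_le_iff)
    hence "\<bar>ln (\<psi> t) / ln t\<bar> < e" using \<open>e > 0\<close> unfolding \<epsilon>_def by linarith
    thus ?case by (simp add: dist_real_def)
  qed
qed

end


locale x_loc = psi_loc +
  fixes x :: "real \<Rightarrow> real"
  assumes xM: "x \<in> M_psi \<psi>"
begin

abbreviation "n \<equiv> distfun x"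
abbreviation "xs \<equiv> rearr x"

lemma xmeas[measurable]: "x \<in> borel_measurable borel"
  using xM by (auto simp: M_psi_def bdd_meas_def)

definition B :: real where "B = (SOME B. B \<ge> 0 \<and> (\<forall>s>0. \<bar>x s\<bar> \<le> B))"

lemma B: "B \<ge> 0" "\<And>s. s > 0 \<Longrightarrow> \<bar>x s\<bar> \<le> B"
proof -
  obtain C where "\<forall>s>0. \<bar>x s\<bar> \<le> C" using xM by (auto simp: M_psi_def bdd_meas_def)
  hence "\<exists>B. B \<ge> 0 \<and> (\<forall>s>0. \<bar>x s\<bar> \<le> B)" by (intro exI[of _ "max 0 C"]) auto
  from someI_ex[OF this] show "B \<ge> 0" "\<And>s. s > 0 \<Longrightarrow> \<bar>x s\<bar> \<le> B" by (auto simp: B_def)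
qed

lemma set_meas[measurable]: "{s. 0 < s \<and> \<bar>x s\<bar> > l} \<in> sets lborel"
  by measurable

lemma n_anti: "a \<le> b \<Longrightarrow> n b \<le> n a"
  unfolding distfun_def by (intro emeasure_mono) auto

lemma n_big: "l \<ge> B \<Longrightarrow> n l = 0"
proof -
  assume l: "l \<ge> B"
  have e: "{s. 0 < s \<and> \<bar>x s\<bar> > l} = {}"
  proof (safe)
    fix s assume "0 < s" "\<bar>x s\<bar> > l"
    thus "s \<in> {}" using B(2)[of s] l by linarith
  qed
  show ?thesis unfolding distfun_def e by simp
qed

lemma n_right: "n v = (SUP k. n (v + 1 / Suc k))"
proof -
  let ?A = "\<lambda>k::nat. {s. 0 < s \<and> \<bar>x s\<bar> > v + 1 / Suc k}"
  have inc: "incseq ?A"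
  proof (rule incseq_SucI)
    fix k :: nat
    have "1 / real (Suc (Suc k)) \<le> 1 / Suc k" by (simp add: frac_le)
    thus "?A k \<subseteq> ?A (Suc k)" by auto
  qed
  have U: "(\<Union>k. ?A k) = {s. 0 < s \<and> \<bar>x s\<bar> > v}"
  proof safe
    fix s assume s: "0 < s" "\<bar>x s\<bar> > v"
    obtain k :: nat where "1 / Suc k < \<bar>x s\<bar> - v" using s by (metis diff_gt_0_iff_gt nat_approx_posE)
    hence "v + 1 / Suc k < \<bar>x s\<bar>" by linarith
    thus "s \<in> (\<Union>k. ?A k)" using s by blast
  next
    fix s k assume "\<bar>x s\<bar> > v + 1 / Suc k"
    moreover have "1 / real (Suc k) > 0" by simp
    ultimately show "\<bar>x s\<bar> > v" by linarith
  qed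
  have "(SUP k. n (v + 1 / Suc k)) = (SUP k. emeasure lborel (?A k))" by (simp add: distfun_def)
  also have "\<dots> = emeasure lborel (\<Union>k. ?A k)" by (rule SUP_emeasure_incseq[OF _ inc]) auto
  finally have eq: "(SUP k. n (v + 1 / Suc k)) = emeasure lborel (\<Union>k. ?A k)" .
  show ?thesis using eq unfolding U by (simp only: distfun_def)
qed

lemma rearr_set: "{l. 0 \<le> l \<and> n l \<le> ennreal t} \<noteq> {}" "B \<in> {l. 0 \<le> l \<and> n l \<le> ennreal t}"
  using B n_big[of B] by auto

lemma xs_nonneg: "0 \<le> xs t"
  unfolding rearr_def using rearr_set by (intro cInf_greatest) auto

lemma xs_le_B: "xs t \<le> B"
  unfolding rearr_def using rearr_set by (intro cInf_lower) auto

lemma xs_anti: "s \<le> t \<Longrightarrow> xs t \<le> xs s"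
proof -
  assume st: "s \<le> t"
  have sub: "{l. 0 \<le> l \<and> n l \<le> ennreal s} \<subseteq> {l. 0 \<le> l \<and> n l \<le> ennreal t}"
    using st by (auto intro: order_trans ennreal_leI)
  have bdd: "bdd_below {l. 0 \<le> l \<and> n l \<le> ennreal t}" by (rule bdd_belowI[of _ 0]) auto
  show ?thesis unfolding rearr_def by (rule cInf_superset_mono[OF rearr_set(1)[of s] bdd sub])
qed

lemma xs_meas[measurable]: "xs \<in> borel_measurable borel"
proof -
  have "(\<lambda>t. - xs t) \<in> borel_measurable borel"
    by (rule borel_measurable_mono) (auto simp: mono_def xs_anti)
  hence "(\<lambda>t. - (- xs t)) \<in> borel_measurable borel" by measurable
  thus ?thesis by simp
qed

lemma key: assumes "0 \<le> v" shows "v < xs s \<longleftrightarrow> ennreal s < n v"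
proof
  assume "ennreal s < n v"
  show "v < xs s"
  proof (rule ccontr)
    assume "\<not> v < xs s"
    hence le: "xs s \<le> v" by simp
    have "n (v + 1 / Suc k) \<le> ennreal s" for k :: nat
    proof -
      have "Inf {l. 0 \<le> l \<and> n l \<le> ennreal s} < v + 1 / Suc k"
      proof -
        have "1 / real (Suc k) > 0" by simp
        thus ?thesis using le unfolding rearr_def by linarith
      qed
      then obtain l where l: "l \<in> {l. 0 \<le> l \<and> n l \<le> ennreal s}" "l < v + 1 / Suc k"
        using cInf_lessD[OF rearr_set(1)] by blast
      have "n (v + 1 / Suc k) \<le> n l" using l by (intro n_anti) simp
      thus ?thesis using l by (blast intro: order_trans)
    qed
    hence "n v \<le> ennreal s" by (subst n_right) (rule SUP_least)
    thus False using \<open>ennreal s < n v\<close> by simp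
  qed
next
  assume "v < xs s"
  show "ennreal s < n v"
  proof (rule ccontr)
    assume "\<not> ennreal s < n v"
    hence "v \<in> {l. 0 \<le> l \<and> n l \<le> ennreal s}" using assms by (simp add: not_less)
    hence "xs s \<le> v" unfolding rearr_def by (intro cInf_lower) auto
    thus False using \<open>v < xs s\<close> by simp
  qed
qed

definition Fe where "Fe t = (\<integral>\<^sup>+ s. ennreal (xs s) * indicator {0..t} s \<partial>lborel)"
definition F where "F t = (LBINT s:{0..t}. xs s)"

lemma xs_int: "integrable lborel (\<lambda>s. indicator {0..t} s *\<^sub>R xs s)"
  by (rule integrableI_bounded_set_indicator[where B=B]) (auto simp: xs_le_B xs_nonneg abs_of_nonneg emeasure_lborel_Icc_eq)

lemma Fe_eq: "Fe t = ennreal (F t)"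
proof -
  have "Fe t = (\<integral>\<^sup>+ s. ennreal (indicator {0..t} s *\<^sub>R xs s) \<partial>lborel)"
    unfolding Fe_def by (intro nn_integral_cong) (auto split: split_indicator)
  also have "\<dots> = ennreal (LINT s|lborel. indicator {0..t} s *\<^sub>R xs s)"
    by (rule nn_integral_eq_integral[OF xs_int]) (auto simp: xs_nonneg)
  finally show ?thesis by (simp add: F_def set_lebesgue_integral_def)
qed

lemma F_nonneg[simp]: "0 \<le> F t"
  unfolding F_def set_lebesgue_integral_def by (intro integral_nonneg_AE) (auto simp: xs_nonneg)

lemma Fe_mono: "a \<le> b \<Longrightarrow> Fe a \<le> Fe b"
  unfolding Fe_def by (intro nn_integral_mono) (auto split: split_indicator)

lemma F_mono: "a \<le> b \<Longrightarrow> F a \<le> F b"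
  using Fe_mono[of a b] F_nonneg by (simp add: Fe_eq)

lemma F_meas[measurable]: "F \<in> borel_measurable borel"
  by (rule borel_measurable_mono) (auto simp: mono_def F_mono)

definition C0 where "C0 = (SOME C. C \<ge> 1 \<and> (\<forall>t>0. F t \<le> C * \<psi> t))"

lemma C0: "C0 \<ge> 1" "\<And>t. t > 0 \<Longrightarrow> F t \<le> C0 * \<psi> t"
proof -
  obtain C where C: "\<forall>t>0. (LBINT s:{0..t}. xs s) / \<psi> t \<le> C" using xM by (auto simp: M_psi_def)
  have "\<exists>C. C \<ge> 1 \<and> (\<forall>t>0. F t \<le> C * \<psi> t)"
  proof (intro exI[of _ "max 1 C"] conjI allI impI)
    fix t :: real assume t: "t > 0"
    have p: "\<psi> t > 0" using psi_pos[OF t] .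
    have "F t \<le> C * \<psi> t" using C t p by (auto simp: F_def field_simps)
    also have "\<dots> \<le> max 1 C * \<psi> t" using p by (intro mult_right_mono) auto
    finally show "F t \<le> max 1 C * \<psi> t" .
  qed simp
  from someI_ex[OF this] show "C0 \<ge> 1" "\<And>t. t > 0 \<Longrightarrow> F t \<le> C0 * \<psi> t"
    unfolding C0_def by auto
qed

lemma Fe_const_lower: "ennreal c * ennreal (b - a) \<le> Fe t"
  if "0 \<le> a" "a \<le> b" "b \<le> t" "\<And>s. a \<le> s \<Longrightarrow> s < b \<Longrightarrow> c \<le> xs s" "0 \<le> c" for a b c t
proof -
  have "ennreal c * ennreal (b - a) = (\<integral>\<^sup>+ s. ennreal c * indicator {a..<b} s \<partial>lborel)"
    using that by (simp add: nn_integral_cmult_indicator emeasure_lborel_Ico)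
  also have "\<dots> \<le> Fe t" unfolding Fe_def
    using that by (intro nn_integral_mono) (auto split: split_indicator intro: ennreal_leI)
  finally show ?thesis .
qed

lemma n_fin: assumes v: "v > 0" shows "n v < \<infinity>"
proof (rule ccontr)
  assume "\<not> n v < \<infinity>"
  hence inf: "n v = \<infinity>" by (simp add: less_top[symmetric])
  have low: "v * t \<le> F t" if t: "t > 0" for t
  proof -
    have "ennreal v * ennreal (t - 0) \<le> Fe t"
    proof (rule Fe_const_lower)
      fix s :: real assume "0 \<le> s"
      hence "v < xs s" using key[of v s] v inf by simp
      thus "v \<le> xs s" by simp
    qed (use v t in auto)
    thus ?thesis using v t by (simp add: Fe_eq ennreal_mult''[symmetric] del: ennreal_mult'')
  qed
  have "\<psi> \<in> o[at_top](\<lambda>t. t)" by (rule so)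
  moreover have "v / (2 * C0) > 0" using v C0(1) by simp
  ultimately have "eventually (\<lambda>t. norm (\<psi> t) \<le> (v / (2 * C0)) * norm t) at_top"
    unfolding smallo_def by blast
  hence "eventually (\<lambda>t. norm (\<psi> t) \<le> (v / (2 * C0)) * norm t \<and> t > 0) at_top"
    using eventually_gt_at_top[of 0] by (rule eventually_conj)
  then obtain t where t: "norm (\<psi> t) \<le> (v / (2 * C0)) * norm t" "t > 0"
    by (auto dest: eventually_happens)
  have "v * t \<le> C0 * \<psi> t" using low[OF t(2)] C0(2)[OF t(2)] by linarith
  also have "C0 * \<psi> t \<le> C0 * ((v / (2 * C0)) * t)"
    using t C0(1) psi_pos[OF t(2)] by (intro mult_left_mono) auto
  also have "\<dots> = v * t / 2" using C0(1) by (simp add: field_simps)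
  finally show False using v t by simp
qed

definition nr where "nr v = enn2real (n v)"

lemma n_nr: "v > 0 \<Longrightarrow> n v = ennreal (nr v)"
  using n_fin[of v] by (simp add: nr_def ennreal_enn2real_if)

lemma nr_nonneg: "0 \<le> nr v" by (simp add: nr_def)

lemma nr_anti: "0 < a \<Longrightarrow> a \<le> b \<Longrightarrow> nr b \<le> nr a"
  using n_anti[of a b] n_nr[of a] n_nr[of b] nr_nonneg[of b] by (simp add: ennreal_le_iff nr_nonneg)

lemma F_low: assumes v: "v > 0" shows "v * nr v \<le> F (nr v)"
proof -
  have "ennreal v * ennreal (nr v - 0) \<le> Fe (nr v)"
  proof (rule Fe_const_lower)
    fix s assume "0 \<le> s" "s < nr v"
    hence "ennreal s < n v" using n_nr[OF v] nr_nonneg by (simp add: ennreal_less_iff)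
    thus "v \<le> xs s" using key[of v s] v by simp
  qed (use v nr_nonneg in auto)
  thus ?thesis using v nr_nonneg[of v] by (simp add: Fe_eq ennreal_mult''[symmetric] F_nonneg del: ennreal_mult'')
qed

lemma F_up: assumes v: "v > 0" and t: "0 \<le> t" shows "F t \<le> F (nr v) + v * max 0 (t - nr v)"
proof -
  let ?T = "nr v"
  have "Fe t \<le> (\<integral>\<^sup>+ s. ennreal (xs s) * indicator {0..?T} s + ennreal v * indicator {?T<..t} s \<partial>lborel)"
    unfolding Fe_def
  proof (intro nn_integral_mono)
    fix s
    show "ennreal (xs s) * indicator {0..t} s \<le> ennreal (xs s) * indicator {0..?T} s + ennreal v * indicator {?T<..t} s"
    proof (cases "s \<in> {0..t}")
      case True
      show ?thesis
      proof (cases "s \<le> ?T")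
        case True
        thus ?thesis using \<open>s \<in> {0..t}\<close> by (auto split: split_indicator)
      next
        case False
        hence "\<not> ennreal s < n v" using n_nr[OF v] \<open>s \<in> {0..t}\<close> by (simp add: ennreal_less_iff)
        hence "\<not> v < xs s" using key[of v s] v by simp
        hence "xs s \<le> v" by simp
        thus ?thesis using False \<open>s \<in> {0..t}\<close> by (auto split: split_indicator intro: ennreal_leI)
      qed
    qed simp
  qed
  also have "\<dots> = Fe ?T + ennreal v * emeasure lborel {?T<..t}"
    unfolding Fe_def by (subst nn_integral_add) (auto simp: nn_integral_cmult_indicator)
  also have "emeasure lborel {?T<..t} = ennreal (max 0 (t - ?T))"
    by (cases "?T \<le> t") (auto simp: emeasure_lborel_Ioc max_def)
  finally have "ennreal (F t) \<le> ennreal (F ?T) + ennreal v * ennreal (max 0 (t - ?T))"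
    by (simp add: Fe_eq)
  also have "\<dots> = ennreal (F ?T + v * max 0 (t - ?T))"
  proof -
    have a: "0 \<le> v * max 0 (t - ?T)" using v by simp
    show ?thesis using a v by (simp add: ennreal_plus ennreal_mult)
  qed
  finally show ?thesis using v F_nonneg by (subst (asm) ennreal_le_iff) auto
qed

end


context x_loc begin

lemma rhs_S: assumes z: "z > 0"
  shows "Fe (nr z) = (\<integral>\<^sup>+ v. ennreal (nr (max v z)) * indicator {0..} v \<partial>lborel)"
proof -
  let ?T = "nr z"
  let ?f = "\<lambda>s v. (indicator {0..<xs s} v * indicator {0..?T} s :: ennreal)"
  have fm: "(\<lambda>(s, v). ?f s v) \<in> borel_measurable (lborel \<Otimes>\<^sub>M lborel)"
  proof -
    have "(\<lambda>(s, v). ?f s v) = (\<lambda>p. if 0 \<le> snd p \<and> snd p < xs (fst p) \<and> 0 \<le> fst p \<and> fst p \<le> ?T then 1 else 0)"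
      by (auto simp: fun_eq_iff split: split_indicator)
    also have "\<dots> \<in> borel_measurable (lborel \<Otimes>\<^sub>M lborel)" by measurable
    finally show ?thesis .
  qed
  have "Fe ?T = (\<integral>\<^sup>+ s. (\<integral>\<^sup>+ v. ?f s v \<partial>lborel) \<partial>lborel)"
    unfolding Fe_def
  proof (intro nn_integral_cong)
    fix s
    have "ennreal (xs s) = (\<integral>\<^sup>+ v. indicator {0..<xs s} v \<partial>lborel)"
      using xs_nonneg[of s] by (simp add: emeasure_lborel_Ico)
    thus "ennreal (xs s) * indicator {0..?T} s = (\<integral>\<^sup>+ v. ?f s v \<partial>lborel)"
      by (simp add: nn_integral_multc)
  qed
  also have "\<dots> = (\<integral>\<^sup>+ v. (\<integral>\<^sup>+ s. ?f s v \<partial>lborel) \<partial>lborel)"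
    by (rule lborel_pair.Fubini'[OF fm, symmetric])
  also have "\<dots> = (\<integral>\<^sup>+ v. ennreal (nr (max v z)) * indicator {0..} v \<partial>lborel)"
  proof (intro nn_integral_cong)
    fix v :: real
    show "(\<integral>\<^sup>+ s. ?f s v \<partial>lborel) = ennreal (nr (max v z)) * indicator {0..} v"
    proof (cases "0 \<le> v")
      case False
      thus ?thesis by (simp add: indicator_def)
    next
      case v0: True
      have eq: "(\<integral>\<^sup>+ s. ?f s v \<partial>lborel) = emeasure lborel {s. 0 \<le> s \<and> s \<le> ?T \<and> v < xs s}"
      proof -
        have "(\<integral>\<^sup>+ s. ?f s v \<partial>lborel) = (\<integral>\<^sup>+ s. indicator {s. 0 \<le> s \<and> s \<le> ?T \<and> v < xs s} s \<partial>lborel)"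
          using v0 by (intro nn_integral_cong) (auto split: split_indicator)
        also have "\<dots> = emeasure lborel {s. 0 \<le> s \<and> s \<le> ?T \<and> v < xs s}"
        proof -
          have m: "{s. 0 \<le> s \<and> s \<le> ?T \<and> v < xs s} \<in> sets lborel" by measurable
          show ?thesis using m by simp
        qed
        finally show ?thesis .
      qed
      show ?thesis
      proof (cases "v < z")
        case True
        have lt: "v < xs s" if s: "0 \<le> s" "s < ?T" for s
        proof -
          have "ennreal s < ennreal ?T" using s by (simp add: ennreal_less_iff)
          also have "ennreal ?T = n z" using n_nr[OF z] by simp
          also have "n z \<le> n v" using True by (intro n_anti) simp
          finally show "v < xs s" using key[OF v0] by simp
        qed
        have sub1: "{0..<?T} \<subseteq> {s. 0 \<le> s \<and> s \<le> ?T \<and> v < xs s}"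
          using lt by auto
        have sub2: "{s. 0 \<le> s \<and> s \<le> ?T \<and> v < xs s} \<subseteq> {0..?T}" by auto
        have "emeasure lborel {0..<?T} \<le> emeasure lborel {s. 0 \<le> s \<and> s \<le> ?T \<and> v < xs s}"
          by (rule emeasure_mono[OF sub1]) measurable
        moreover have "emeasure lborel {s. 0 \<le> s \<and> s \<le> ?T \<and> v < xs s} \<le> emeasure lborel {0..?T}"
          by (rule emeasure_mono[OF sub2]) measurable
        ultimately have "emeasure lborel {s. 0 \<le> s \<and> s \<le> ?T \<and> v < xs s} = ennreal ?T"
          using nr_nonneg[of z] by (simp add: emeasure_lborel_Ico emeasure_lborel_Icc)
        thus ?thesis using eq True v0 by (simp add: max_def)
      next
        case False
        have vp: "v > 0" using False z by simp
        have le: "nr v \<le> ?T" using False z by (intro nr_anti) auto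
        have iff: "v < xs s \<longleftrightarrow> s < nr v" if s: "0 \<le> s" for s
        proof -
          have "v < xs s \<longleftrightarrow> ennreal s < ennreal (nr v)" using key[OF v0, of s] n_nr[OF vp] by simp
          also have "\<dots> \<longleftrightarrow> s < nr v" using s by (simp add: ennreal_less_iff)
          finally show ?thesis .
        qed
        have "{s. 0 \<le> s \<and> s \<le> ?T \<and> v < xs s} = {0..<nr v}"
          using iff le by fastforce
        thus ?thesis using eq False v0 nr_nonneg[of v] by (simp add: emeasure_lborel_Ico max_def)
      qed
    qed
  qed
  finally show ?thesis .
qed

lemma nr_big: "l \<ge> B \<Longrightarrow> nr l = 0"
  using n_big by (simp add: nr_def)

lemma nr_right: assumes a: "a > 0" shows "(\<lambda>k. nr (a + 1 / Suc k)) \<longlonglongrightarrow> nr a"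
proof -
  have inc: "incseq (\<lambda>k. n (a + 1 / Suc k))"
  proof (rule incseq_SucI)
    fix k :: nat
    have "1 / real (Suc (Suc k)) \<le> 1 / Suc k" by (simp add: frac_le)
    thus "n (a + 1 / Suc k) \<le> n (a + 1 / Suc (Suc k))" by (intro n_anti) simp
  qed
  have "(\<lambda>k. n (a + 1 / Suc k)) \<longlonglongrightarrow> (SUP k. n (a + 1 / Suc k))" by (rule LIMSEQ_SUP[OF inc])
  hence "(\<lambda>k. n (a + 1 / Suc k)) \<longlonglongrightarrow> ennreal (nr a)" using n_right[of a] n_nr[OF a] by simp
  hence "(\<lambda>k. enn2real (n (a + 1 / Suc k))) \<longlonglongrightarrow> nr a" by (rule tendsto_enn2real) (simp add: nr_nonneg)
  thus ?thesis by (simp add: nr_def)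
qed

context fixes z :: real assumes z: "z > 0"
begin

definition G where "G = (\<lambda>l. - enn2real (distfun x (max l z)))"

lemma G_nr: "G l = - nr (max l z)" by (simp add: G_def nr_def)

lemma G_mono: "a \<le> b \<Longrightarrow> G a \<le> G b"
  unfolding G_nr using z by (auto intro!: nr_anti)

lemma G_le0: "G l \<le> 0" by (simp add: G_nr nr_nonneg)

lemma G_ge: "- nr z \<le> G l" unfolding G_nr using z by (auto intro!: nr_anti)

lemma G_rc: "continuous (at_right a) G"
proof (subst continuous_at_right_real_increasing)
  show "\<And>x y. x \<le> y \<Longrightarrow> G x \<le> G y" by (rule G_mono)
  show "\<forall>\<epsilon>>0. \<exists>\<delta>>0. G (a + \<delta>) - G a < \<epsilon>"
  proof (intro allI impI)
    fix \<epsilon> :: real assume e: "\<epsilon> > 0"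
    show "\<exists>\<delta>>0. G (a + \<delta>) - G a < \<epsilon>"
    proof (cases "a < z")
      case True
      thus ?thesis using e by (intro exI[of _ "z - a"]) (simp add: G_nr max_def)
    next
      case False
      hence a: "a > 0" "max a z = a" using z by auto
      from nr_right[OF a(1)] obtain k where k: "\<bar>nr (a + 1 / Suc k) - nr a\<bar> < \<epsilon>"
        using e by (auto simp: LIMSEQ_def dist_real_def)
      have "max (a + 1 / Suc k) z = a + 1 / Suc k" using False
        by (smt (verit) of_nat_0_less_iff divide_pos_pos zero_less_Suc)
      thus ?thesis using k a by (intro exI[of _ "1 / Suc k"]) (auto simp: G_nr)
    qed
  qed
qed

abbreviation "\<mu> \<equiv> interval_measure G"

lemma mu_Ioc: "a \<le> b \<Longrightarrow> emeasure \<mu> {a<..b} = ennreal (G b - G a)"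
  by (rule emeasure_interval_measure_Ioc) (auto intro: G_mono G_rc)

lemma UN_Ioc: "(\<Union>k::nat. {- real k<..real k}) = UNIV"
proof safe
  fix y :: real
  obtain k :: nat where "\<bar>y\<bar> < real k" using reals_Archimedean2 by blast
  hence "y \<in> {- real k<..real k}" by auto
  thus "y \<in> (\<Union>k. {- real k<..real k})" by blast
qed simp

lemma mu_fin: "finite_measure \<mu>"
proof (rule finite_measureI)
  have "emeasure \<mu> (space \<mu>) = emeasure \<mu> (\<Union>k::nat. {- real k<..real k})" by (simp add: UN_Ioc)
  also have "\<dots> = (SUP k. emeasure \<mu> {- real k<..real k})"
    by (rule SUP_emeasure_incseq[symmetric]) (auto simp: incseq_def)
  also have "\<dots> \<le> ennreal (nr z)"
  proof (rule SUP_least)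
    fix k :: nat
    have "emeasure \<mu> {- real k<..real k} = ennreal (G k - G (- real k))" by (rule mu_Ioc) simp
    also have "\<dots> \<le> ennreal (nr z)" using G_le0[of k] G_ge[of "- real k"] by (intro ennreal_leI) linarith
    finally show "emeasure \<mu> {- real k<..real k} \<le> ennreal (nr z)" .
  qed
  finally show "emeasure \<mu> (space \<mu>) \<noteq> \<infinity>" by (auto simp: top_unique)
qed

lemma mu_tail: assumes a: "a \<ge> z" shows "emeasure \<mu> {a<..} = ennreal (nr a)"
proof -
  have U: "(\<Union>k::nat. {a<..a + real k}) = {a<..}"
  proof safe
    fix y assume "a < y"
    obtain k :: nat where "y - a < real k" using reals_Archimedean2 by blast
    hence "y \<in> {a<..a + real k}" using \<open>a < y\<close> by auto
    thus "y \<in> (\<Union>k. {a<..a + real k})" by blast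
  qed auto
  have "emeasure \<mu> {a<..} = (SUP k. emeasure \<mu> {a<..a + real k})"
    unfolding U[symmetric] by (rule SUP_emeasure_incseq[symmetric]) (auto simp: incseq_def)
  also have "\<dots> = (SUP k. ennreal (nr a - nr (a + real k)))"
  proof (intro SUP_cong refl)
    fix k :: nat
    have "max (a + real k) z = a + real k" "max a z = a" using a by auto
    thus "emeasure \<mu> {a<..a + real k} = ennreal (nr a - nr (a + real k))"
      by (subst mu_Ioc) (auto simp: G_nr)
  qed
  also have "\<dots> = ennreal (nr a)"
  proof (rule antisym)
    show "(SUP k. ennreal (nr a - nr (a + real k))) \<le> ennreal (nr a)"
      by (rule SUP_least) (auto intro!: ennreal_leI simp: nr_nonneg)
    obtain k :: nat where k: "B - a < real k" using reals_Archimedean2 by blast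
    have "nr (a + real k) = 0" using k by (intro nr_big) simp
    hence "ennreal (nr a) = ennreal (nr a - nr (a + real k))" by simp
    also have "\<dots> \<le> (SUP k. ennreal (nr a - nr (a + real k)))" by (rule SUP_upper) simp
    finally show "ennreal (nr a) \<le> (SUP k. ennreal (nr a - nr (a + real k)))" .
  qed
  finally show ?thesis .
qed

lemma lhs_S:
  "(\<integral>\<^sup>+ u. ennreal u * indicator {z<..} u \<partial>\<mu>) =
     (\<integral>\<^sup>+ v. ennreal (nr (max v z)) * indicator {0..} v \<partial>lborel)"
proof -
  interpret fm: finite_measure \<mu> by (rule mu_fin)
  interpret ps: pair_sigma_finite \<mu> lborel
    by (rule pair_sigma_finite.intro) (unfold_locales)
  let ?f = "\<lambda>u v. (indicator {0..<u} v * indicator {z<..} u :: ennreal)"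
  have fm: "(\<lambda>(u, v). ?f u v) \<in> borel_measurable (\<mu> \<Otimes>\<^sub>M lborel)"
  proof -
    have "(\<lambda>(u, v). ?f u v) = (\<lambda>p. if 0 \<le> snd p \<and> snd p < fst p \<and> z < fst p then 1 else 0)"
      by (auto simp: fun_eq_iff split: split_indicator)
    also have "\<dots> \<in> borel_measurable (\<mu> \<Otimes>\<^sub>M lborel)" by measurable
    finally show ?thesis .
  qed
  have "(\<integral>\<^sup>+ u. ennreal u * indicator {z<..} u \<partial>\<mu>) = (\<integral>\<^sup>+ u. (\<integral>\<^sup>+ v. ?f u v \<partial>lborel) \<partial>\<mu>)"
  proof (intro nn_integral_cong)
    fix u :: real
    show "ennreal u * indicator {z<..} u = (\<integral>\<^sup>+ v. ?f u v \<partial>lborel)"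
    proof (cases "z < u")
      case True
      hence "(\<integral>\<^sup>+ v. ?f u v \<partial>lborel) = emeasure lborel {0..<u}"
        by (simp add: nn_integral_multc)
      thus ?thesis using True z by (simp add: emeasure_lborel_Ico)
    qed simp
  qed
  also have "\<dots> = (\<integral>\<^sup>+ v. (\<integral>\<^sup>+ u. ?f u v \<partial>\<mu>) \<partial>lborel)"
    by (rule ps.Fubini'[OF fm, symmetric])
  also have "\<dots> = (\<integral>\<^sup>+ v. ennreal (nr (max v z)) * indicator {0..} v \<partial>lborel)"
  proof (intro nn_integral_cong)
    fix v :: real
    show "(\<integral>\<^sup>+ u. ?f u v \<partial>\<mu>) = ennreal (nr (max v z)) * indicator {0..} v"
    proof (cases "0 \<le> v")
      case False
      thus ?thesis by (simp add: indicator_def)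
    next
      case True
      have "(\<integral>\<^sup>+ u. ?f u v \<partial>\<mu>) = (\<integral>\<^sup>+ u. indicator {max v z<..} u \<partial>\<mu>)"
        using True by (intro nn_integral_cong) (auto split: split_indicator)
      also have "\<dots> = emeasure \<mu> {max v z<..}" by simp
      also have "\<dots> = ennreal (nr (max v z))" by (rule mu_tail) simp
      finally show ?thesis using True by simp
    qed
  qed
  finally show ?thesis .
qed

end

lemma stieltjes: assumes z: "z > 0" shows "stieltjes_tail x z = F (nr z)"
proof -
  have "stieltjes_tail x z = enn2real (\<integral>\<^sup>+ u. ennreal u * indicator {z<..} u \<partial>interval_measure (G z))"
    by (simp add: stieltjes_tail_def G_def[OF z])
  also have "\<dots> = enn2real (Fe (nr z))" by (simp add: lhs_S[OF z] rhs_S[OF z])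
  finally show ?thesis by (simp add: Fe_eq)
qed

end


definition J :: "(real \<Rightarrow> real) \<Rightarrow> real \<Rightarrow> ennreal" where
  "J h T = (\<integral>\<^sup>+ s. ennreal (h s / s) * indicator {1..T} s \<partial>lborel)"

lemma int_const:
  assumes c: "0 \<le> c" and ab: "1 \<le> a" "a \<le> b"
  shows "(\<integral>\<^sup>+ s. ennreal (c / s) * indicator {a..b} s \<partial>lborel) = ennreal (c * (ln b - ln a))"
proof -
  have cont: "continuous_on {a..b} (\<lambda>s. c / s)" using ab by (intro continuous_intros) auto
  have "(LINT s|lborel. indicator {a..b} s *\<^sub>R (c / s)) = c * ln b - c * ln a"
  proof (rule integral_FTC_atLeastAtMost[OF ab(2) _ cont])
    fix s assume s: "a \<le> s" "s \<le> b"
    have "((\<lambda>s. c * ln s) has_real_derivative c * inverse s) (at s)"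
      using s ab by (auto intro!: derivative_eq_intros simp: divide_inverse)
    hence "((\<lambda>s. c * ln s) has_real_derivative c / s) (at s within {a..b})"
      by (simp add: divide_inverse has_field_derivative_at_within)
    thus "((\<lambda>s. c * ln s) has_vector_derivative c / s) (at s within {a..b})"
      by (simp add: has_real_derivative_iff_has_vector_derivative)
  qed
  moreover have "(\<integral>\<^sup>+ s. ennreal (indicator {a..b} s *\<^sub>R (c / s)) \<partial>lborel) =
      ennreal (LINT s|lborel. indicator {a..b} s *\<^sub>R (c / s))"
    using borel_integrable_atLeastAtMost'[OF cont] ab c
    by (intro nn_integral_eq_integral) (auto simp: set_integrable_def split: split_indicator)
  moreover have "(\<integral>\<^sup>+ s. ennreal (c / s) * indicator {a..b} s \<partial>lborel) =
      (\<integral>\<^sup>+ s. ennreal (indicator {a..b} s *\<^sub>R (c / s)) \<partial>lborel)"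
    by (intro nn_integral_cong) (auto split: split_indicator)
  ultimately show ?thesis by (simp only: right_diff_distrib)
qed

lemma J_fin_eq:
  assumes hm[measurable]: "h \<in> borel_measurable borel" and T: "1 \<le> T"
    and hb: "\<And>s. 1 \<le> s \<Longrightarrow> s \<le> T \<Longrightarrow> 0 \<le> h s \<and> h s \<le> M"
  shows "set_integrable lborel {1..T} (\<lambda>s. h s / s)" "J h T = ennreal (LBINT s:{1..T}. h s / s)"
proof -
  have hm2: "(\<lambda>x. h x / x) \<in> borel_measurable borel" by measurable
  show si: "set_integrable lborel {1..T} (\<lambda>s. h s / s)"
    unfolding set_integrable_def
  proof (rule integrableI_bounded_set_indicator[where B=M])
    show "AE x\<in>{1..T} in lborel. norm (h x / x) \<le> M"
    proof (intro AE_I2 impI)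
      fix x :: real assume x: "x \<in> {1..T}"
      hence "h x / x \<le> h x" using hb[of x] by (auto simp: divide_le_eq mult_le_cancel_left1)
      thus "norm (h x / x) \<le> M" using hb[of x] x by auto
    qed
  qed (auto simp: emeasure_lborel_Icc_eq hm2)
  have "J h T = (\<integral>\<^sup>+ s. ennreal (indicator {1..T} s *\<^sub>R (h s / s)) \<partial>lborel)"
    unfolding J_def by (intro nn_integral_cong) (auto split: split_indicator)
  also have "\<dots> = ennreal (LBINT s:{1..T}. h s / s)"
    unfolding set_lebesgue_integral_def
    using si hb by (intro nn_integral_eq_integral) (auto simp: set_integrable_def split: split_indicator)
  finally show "J h T = ennreal (LBINT s:{1..T}. h s / s)" .
qed

lemma J_mono: "(\<And>s. 1 \<le> s \<Longrightarrow> s \<le> T \<Longrightarrow> h1 s \<le> h2 s) \<Longrightarrow> J h1 T \<le> J h2 T"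
  unfolding J_def by (intro nn_integral_mono) (auto split: split_indicator intro!: ennreal_leI divide_right_mono)

lemma J_add:
  assumes "h1 \<in> borel_measurable borel" "h2 \<in> borel_measurable borel"
    "\<And>s. 1 \<le> s \<Longrightarrow> 0 \<le> h1 s" "\<And>s. 1 \<le> s \<Longrightarrow> 0 \<le> h2 s"
  shows "J (\<lambda>s. h1 s + h2 s) T = J h1 T + J h2 T"
proof -
  have "J (\<lambda>s. h1 s + h2 s) T = (\<integral>\<^sup>+ s. ennreal (h1 s / s) * indicator {1..T} s + ennreal (h2 s / s) * indicator {1..T} s \<partial>lborel)"
    unfolding J_def using assms
    by (intro nn_integral_cong) (auto split: split_indicator simp: add_divide_distrib ennreal_plus)
  also have "\<dots> = J h1 T + J h2 T" unfolding J_def using assms by (intro nn_integral_add) auto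
  finally show ?thesis .
qed

lemma J_const: "0 \<le> c \<Longrightarrow> 1 \<le> T \<Longrightarrow> J (\<lambda>_. c) T = ennreal (c * ln T)"
  using int_const[of c 1 T] by (simp add: J_def)

lemma Ces:
  assumes hm: "h \<in> borel_measurable borel"
    and hb: "\<And>s. 1 \<le> s \<Longrightarrow> 0 \<le> h s \<and> h s \<le> M"
    and lim: "(h \<longlongrightarrow> 0) at_top"
  shows "((\<lambda>T. enn2real (J h T) / ln T) \<longlongrightarrow> 0) at_top"
proof (rule tendstoI)
  fix e :: real assume e: "e > 0"
  have M: "M \<ge> 0" using hb[of 1] by simp
  have "eventually (\<lambda>s. h s < e / 2) at_top" using lim e by (intro order_tendstoD) auto
  then obtain T0 where T0: "\<And>s. s \<ge> T0 \<Longrightarrow> h s < e / 2" by (auto simp: eventually_at_top_linorder)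
  define T1 where "T1 = max 1 T0"
  have T1: "T1 \<ge> 1" "T1 \<ge> T0" by (auto simp: T1_def)
  have bnd: "enn2real (J h T) \<le> M * ln T1 + e / 2 * ln T" if T: "T \<ge> T1" for T
  proof -
    have "J h T \<le> (\<integral>\<^sup>+ s. ennreal (M / s) * indicator {1..T1} s + ennreal ((e/2) / s) * indicator {1..T} s \<partial>lborel)"
      unfolding J_def
    proof (intro nn_integral_mono)
      fix s :: real
      show "ennreal (h s / s) * indicator {1..T} s \<le> ennreal (M / s) * indicator {1..T1} s + ennreal ((e/2) / s) * indicator {1..T} s"
      proof (cases "1 \<le> s \<and> s \<le> T")
        case True
        show ?thesis
        proof (cases "s \<le> T1")
          case True
          hence "ennreal (h s / s) \<le> ennreal (M / s)" using hb[of s] \<open>1 \<le> s \<and> s \<le> T\<close>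
            by (intro ennreal_leI divide_right_mono) auto
          hence "ennreal (h s / s) \<le> ennreal (M / s) + ennreal ((e/2) / s)"
            by (rule add_increasing2[OF zero_le])
          thus ?thesis using True \<open>1 \<le> s \<and> s \<le> T\<close> by (simp add: indicator_def)
        next
          case False
          hence "ennreal (h s / s) \<le> ennreal ((e/2) / s)" using T0[of s] T1 \<open>1 \<le> s \<and> s \<le> T\<close>
            by (intro ennreal_leI divide_right_mono) auto
          thus ?thesis using False \<open>1 \<le> s \<and> s \<le> T\<close> by (auto simp: indicator_def)
        qed
      qed simp
    qed
    also have "\<dots> = ennreal (M * ln T1) + ennreal (e / 2 * ln T)"
      using int_const[of M 1 T1] int_const[of "e/2" 1 T] M e T1 T
      by (subst nn_integral_add) auto
    also have "\<dots> = ennreal (M * ln T1 + e / 2 * ln T)" using M e T1 T by (simp add: ennreal_plus)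
    finally have "J h T \<le> ennreal (M * ln T1 + e / 2 * ln T)" .
    thus ?thesis using M e T1 T by (simp add: enn2real_leI)
  qed
  have ev1: "eventually (\<lambda>T. M * ln T1 < e / 2 * ln T) at_top"
  proof -
    have "filterlim (\<lambda>T. e / 2 * ln T) at_top at_top"
      using e by (intro filterlim_tendsto_pos_mult_at_top[OF tendsto_const] ln_at_top) auto
    thus ?thesis by (simp add: filterlim_at_top_dense)
  qed
  show "eventually (\<lambda>T. dist (enn2real (J h T) / ln T) 0 < e) at_top"
    using ev1 eventually_ge_at_top[of T1] eventually_gt_at_top[of 1]
  proof eventually_elim
    case (elim T)
    have lnT: "ln T > 0" using elim by simp
    have "enn2real (J h T) < e * ln T" using bnd[of T] elim by simp
    hence "enn2real (J h T) / ln T < e" using lnT by (simp add: field_simps)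
    thus ?case using lnT by (simp add: dist_real_def enn2real_nonneg)
  qed
qed



lemma subst_lin:
  assumes fm[measurable]: "fb \<in> borel_measurable borel" and c: "c > 0" and p: "p > 0"
  shows "(\<integral>\<^sup>+ s. ennreal (fb (c * s) / s) * indicator {p..<q} s \<partial>lborel) =
         (\<integral>\<^sup>+ u. ennreal (fb u / u) * indicator {c * p..<c * q} u \<partial>lborel)"
proof -
  let ?phi = "\<lambda>u. ennreal (fb u / u) * indicator {c * p..<c * q} u"
  have "(\<integral>\<^sup>+ u. ?phi u \<partial>lborel) = ennreal \<bar>c\<bar> * (\<integral>\<^sup>+ x. ?phi (0 + c * x) \<partial>lborel)"
    by (rule nn_integral_real_affine) (use c in auto)
  also have "\<dots> = (\<integral>\<^sup>+ x. ennreal c * ?phi (c * x) \<partial>lborel)"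
    using c by (subst nn_integral_cmult) auto
  also have "\<dots> = (\<integral>\<^sup>+ s. ennreal (fb (c * s) / s) * indicator {p..<q} s \<partial>lborel)"
  proof (intro nn_integral_cong)
    fix x :: real
    show "ennreal c * ?phi (c * x) = ennreal (fb (c * x) / x) * indicator {p..<q} x"
    proof (cases "x \<in> {p..<q}")
      case True
      hence x: "x > 0" using p by auto
      have "c * x \<in> {c * p..<c * q}" using True c by auto
      moreover have "ennreal c * ennreal (fb (c * x) / (c * x)) = ennreal (fb (c * x) / x)"
        using c x by (simp add: ennreal_mult'[symmetric])
      ultimately show ?thesis using True by (simp add: mult.assoc)
    next
      case False
      hence "c * x \<notin> {c * p..<c * q}" using c by auto
      thus ?thesis using False by simp
    qed
  qed
  finally show ?thesis by simp
qed

lemma floor_ln: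
  assumes s: "s \<ge> 1"
  shows "exp (real (nat \<lfloor>ln s\<rfloor>)) \<le> s" "s < exp (real (nat \<lfloor>ln s\<rfloor>) + 1)"
proof -
  have l0: "ln s \<ge> 0" using s by simp
  hence eq: "real (nat \<lfloor>ln s\<rfloor>) = real_of_int \<lfloor>ln s\<rfloor>" by simp
  have "exp (real_of_int \<lfloor>ln s\<rfloor>) \<le> exp (ln s)" by simp
  thus "exp (real (nat \<lfloor>ln s\<rfloor>)) \<le> s" using s eq by simp
  have "ln s < real_of_int \<lfloor>ln s\<rfloor> + 1" by linarith
  hence "exp (ln s) < exp (real_of_int \<lfloor>ln s\<rfloor> + 1)" by simp
  thus "s < exp (real (nat \<lfloor>ln s\<rfloor>) + 1)" using s eq by simp
qed

lemma block:
  fixes fb :: "real \<Rightarrow> real" and cs :: "nat \<Rightarrow> real"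
  assumes fm[measurable]: "fb \<in> borel_measurable borel"
    and fbb: "\<And>u. u \<ge> 1 \<Longrightarrow> 0 \<le> fb u \<and> fb u \<le> C"
    and cs1: "\<And>k. cs k \<ge> 1" and csm: "\<And>k. cs k \<le> cs (Suc k)"
    and T: "T \<ge> 1"
  shows "J (\<lambda>s. fb (cs (nat \<lfloor>ln s\<rfloor>) * s)) T \<le> J fb T + ennreal (C * (ln (cs (nat \<lfloor>ln T\<rfloor>)) + 1))"
proof -
  define K where "K = nat \<lfloor>ln T\<rfloor>"
  define I where "I k = {exp (real k)..<exp (real k + 1)}" for k :: nat
  define a where "a k = cs k * exp (real k)" for k :: nat
  define b where "b k = cs k * exp (real k + 1)" for k :: nat
  have C0: "C \<ge> 0" using fbb[of 1] by simp
  have csp: "cs k > 0" for k using cs1[of k] by simp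
  have csmono: "cs k \<le> cs j" if "k \<le> j" for k j using that
    by (induction rule: dec_induct) (auto intro: order_trans csm)
  have "J (\<lambda>s. fb (cs (nat \<lfloor>ln s\<rfloor>) * s)) T \<le>
      (\<integral>\<^sup>+ s. (\<Sum>k\<le>K. ennreal (fb (cs k * s) / s) * indicator (I k) s) \<partial>lborel)"
    unfolding J_def
  proof (intro nn_integral_mono)
    fix s :: real
    show "ennreal (fb (cs (nat \<lfloor>ln s\<rfloor>) * s) / s) * indicator {1..T} s \<le>
        (\<Sum>k\<le>K. ennreal (fb (cs k * s) / s) * indicator (I k) s)"
    proof (cases "s \<in> {1..T}")
      case True
      define k0 where "k0 = nat \<lfloor>ln s\<rfloor>"
      have "k0 \<le> K" unfolding k0_def K_def using True by (intro nat_mono floor_mono) auto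
      moreover have "s \<in> I k0" using floor_ln[of s] True by (auto simp: I_def k0_def)
      ultimately have "ennreal (fb (cs k0 * s) / s) * indicator (I k0) s \<le>
          (\<Sum>k\<le>K. ennreal (fb (cs k * s) / s) * indicator (I k) s)"
        by (intro member_le_sum) auto
      thus ?thesis using True \<open>s \<in> I k0\<close> by (simp add: k0_def)
    qed simp
  qed
  also have "\<dots> = (\<Sum>k\<le>K. \<integral>\<^sup>+ s. ennreal (fb (cs k * s) / s) * indicator (I k) s \<partial>lborel)"
    by (rule nn_integral_sum) (auto simp: I_def)
  also have "\<dots> = (\<Sum>k\<le>K. \<integral>\<^sup>+ u. ennreal (fb u / u) * indicator {a k..<b k} u \<partial>lborel)"
    by (intro sum.cong refl) (simp add: I_def a_def b_def subst_lin[OF fm csp])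
  also have "\<dots> = (\<integral>\<^sup>+ u. (\<Sum>k\<le>K. ennreal (fb u / u) * indicator {a k..<b k} u) \<partial>lborel)"
    by (rule nn_integral_sum[symmetric]) auto
  also have "\<dots> \<le> (\<integral>\<^sup>+ u. ennreal (fb u / u) * indicator {1..T} u + ennreal (C / u) * indicator {T..b K} u \<partial>lborel)"
  proof (intro nn_integral_mono)
    fix u :: real
    have ab: "a k \<le> b k" for k using csp[of k] by (simp add: a_def b_def)
    have ba: "b k \<le> a j" if "k < j" for k j
    proof -
      have "b k = cs k * exp (real k + 1)" by (simp add: b_def)
      also have "\<dots> \<le> cs j * exp (real j)"
        using that csmono[of k j] less_imp_le[OF csp[of j]] by (intro mult_mono) auto
      finally show ?thesis by (simp add: a_def)
    qed
    have disj: "disjoint_family_on (\<lambda>k. {a k..<b k}) {..K}"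
      unfolding disjoint_family_on_def
    proof (intro ballI impI)
      fix k j :: nat assume "k \<noteq> j"
      hence "k < j \<or> j < k" by auto
      thus "{a k..<b k} \<inter> {a j..<b j} = {}" using ba by fastforce
    qed
    have "(\<Sum>k\<le>K. ennreal (fb u / u) * indicator {a k..<b k} u) =
        ennreal (fb u / u) * (\<Sum>k\<le>K. indicator {a k..<b k} u)"
      by (simp add: sum_distrib_left)
    also have "(\<Sum>k\<le>K. indicator {a k..<b k} u :: ennreal) = indicator (\<Union>k\<le>K. {a k..<b k}) u"
      by (rule indicator_UN_disjoint[symmetric]) (use disj in auto)
    also have "ennreal (fb u / u) * indicator (\<Union>k\<le>K. {a k..<b k}) u \<le>
        ennreal (fb u / u) * indicator {1..T} u + ennreal (C / u) * indicator {T..b K} u"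
    proof (cases "u \<in> (\<Union>k\<le>K. {a k..<b k})")
      case True
      then obtain k where k: "k \<le> K" "a k \<le> u" "u < b k" by auto
      have "1 * 1 \<le> cs k * exp (real k)" using cs1[of k] by (intro mult_mono) auto
      hence "1 \<le> a k" by (simp add: a_def)
      hence u1: "1 \<le> u" using k by simp
      have "b k \<le> b K" using k csmono[of k K] less_imp_le[OF csp[of K]] by (auto simp: b_def intro!: mult_mono)
      hence ubK: "u \<le> b K" using k by simp
      show ?thesis
      proof (cases "u \<le> T")
        case True
        thus ?thesis using u1 \<open>u \<in> _\<close> by (simp add: indicator_def)
      next
        case False
        have "fb u / u \<le> C / u" using fbb[OF u1] u1 by (intro divide_right_mono) auto
        hence "ennreal (fb u / u) \<le> ennreal (C / u)" by (rule ennreal_leI)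
        thus ?thesis using False ubK \<open>u \<in> _\<close> by (simp add: indicator_def)
      qed
    qed simp
    finally show "(\<Sum>k\<le>K. ennreal (fb u / u) * indicator {a k..<b k} u) \<le>
        ennreal (fb u / u) * indicator {1..T} u + ennreal (C / u) * indicator {T..b K} u" .
  qed
  also have "\<dots> = J fb T + ennreal (C * (ln (b K) - ln T))"
  proof -
    have "T < exp (real K + 1)" using floor_ln[OF T] by (simp add: K_def)
    also have "exp (real K + 1) \<le> b K" using cs1[of K] by (simp add: b_def)
    finally have "T \<le> b K" by simp
    thus ?thesis unfolding J_def using int_const[of C T "b K"] C0 T
      by (subst nn_integral_add) auto
  qed
  also have "ennreal (C * (ln (b K) - ln T)) \<le> ennreal (C * (ln (cs K) + 1))"
  proof (intro ennreal_leI mult_left_mono C0)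
    have "ln (b K) = ln (cs K) + (real K + 1)" using csp[of K] by (simp add: b_def ln_mult)
    moreover have "real K \<le> ln T"
    proof -
      have "ln T \<ge> 0" using T by simp
      hence "real (nat \<lfloor>ln T\<rfloor>) = real_of_int \<lfloor>ln T\<rfloor>" by simp
      thus ?thesis unfolding K_def by linarith
    qed
    ultimately show "ln (b K) - ln T \<le> ln (cs K) + 1" by linarith
  qed
  finally show ?thesis by (simp add: K_def add_left_mono)
qed



locale an_loc = psi_loc +
  fixes F N :: "real \<Rightarrow> real" and C :: real
  assumes C1: "C \<ge> 1"
    and Fmono: "\<And>a b. a \<le> b \<Longrightarrow> F a \<le> F b"
    and F0: "\<And>t. 0 \<le> F t"
    and FC: "\<And>t. t > 0 \<Longrightarrow> F t \<le> C * \<psi> t"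
    and Nnn: "\<And>t. t \<ge> 1 \<Longrightarrow> 0 \<le> N t"
    and Nmono: "\<And>a b. 1 \<le> a \<Longrightarrow> a \<le> b \<Longrightarrow> N a \<le> N b"
    and Nlow: "\<And>t. t \<ge> 1 \<Longrightarrow> N t / t \<le> F (N t)"
    and Nup: "\<And>t. t \<ge> 1 \<Longrightarrow> F t \<le> F (N t) + max 0 (t - N t) / t"
    and Fm[measurable]: "F \<in> borel_measurable borel"
    and Nm[measurable]: "N \<in> borel_measurable borel"
begin

definition ps where "ps s = \<psi> (max 1 s)"
definition ff where "ff s = F s / ps s"
definition gg where "gg s = F (N s) / ps s"
definition cs where "cs k = max 1 (2 * C * ps (C * exp (real k + 1)))"
definition cf :: "real \<Rightarrow> real" where "cf s = max 1 (2 * C * ps (C * exp (real_of_int \<lfloor>ln s\<rfloor> + 1)))"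
definition kk1 where "kk1 s = 1 / ps s"
definition kk2 where "kk2 s = max 0 (gg s - ff (cf s * s))"

lemma ps_pos: "ps s > 0" by (simp add: ps_def psi_pos)
lemma ps_eq: "s \<ge> 1 \<Longrightarrow> ps s = \<psi> s" by (simp add: ps_def)
lemma ps_mono: "a \<le> b \<Longrightarrow> ps a \<le> ps b" unfolding ps_def by (intro psi_mono) auto
lemma ps_meas[measurable]: "ps \<in> borel_measurable borel"
  by (rule borel_measurable_mono) (auto simp: mono_def ps_mono)

lemma fl_meas[measurable]: "(\<lambda>x::real. real_of_int \<lfloor>ln x\<rfloor>) \<in> borel_measurable borel"
  by (rule measurable_compose[OF _ borel_measurable_real_floor]) measurable

lemma cf_meas[measurable]: "cf \<in> borel_measurable borel"
proof -
  have e: "cf = (\<lambda>s. (\<lambda>v. max 1 (2 * C * ps (C * exp (v + 1)))) (real_of_int \<lfloor>ln s\<rfloor>))"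
    by (simp add: cf_def fun_eq_iff)
  have "(\<lambda>v. max 1 (2 * C * ps (C * exp (v + 1)))) \<in> borel_measurable borel" by measurable
  from measurable_compose[OF fl_meas this] show ?thesis by (simp add: cf_def[abs_def])
qed
lemma ff_meas[measurable]: "ff \<in> borel_measurable borel" unfolding ff_def by measurable
lemma gg_meas[measurable]: "gg \<in> borel_measurable borel" unfolding gg_def by measurable
lemma kk1_meas[measurable]: "kk1 \<in> borel_measurable borel" unfolding kk1_def by measurable
lemma kk2_meas[measurable]: "kk2 \<in> borel_measurable borel" unfolding kk2_def by measurable
lemma ffc_meas[measurable]: "(\<lambda>s. ff (cf s * s)) \<in> borel_measurable borel" by measurable

lemma ff_bd: "0 \<le> ff s" "ff s \<le> C"
proof -
  show "0 \<le> ff s" using F0[of s] ps_pos[of s] by (simp add: ff_def)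
  have "F s \<le> F (max 1 s)" by (rule Fmono) simp
  also have "\<dots> \<le> C * ps s" using FC[of "max 1 s"] by (simp add: ps_def)
  finally show "ff s \<le> C" using ps_pos by (simp add: ff_def divide_le_eq)
qed

lemma gg_nonneg: "0 \<le> gg s" using F0[of "N s"] ps_pos[of s] by (simp add: gg_def)

lemma cf_ge1: "cf s \<ge> 1" by (simp add: cf_def)
lemma cs_ge1: "cs k \<ge> 1" by (simp add: cs_def)
lemma cs_mono: "cs k \<le> cs (Suc k)"
proof -
  have "C * exp (real k + 1) \<le> C * exp (real (Suc k) + 1)" using C1 by simp
  hence "ps (C * exp (real k + 1)) \<le> ps (C * exp (real (Suc k) + 1))" by (rule ps_mono)
  hence "2 * C * ps (C * exp (real k + 1)) \<le> 2 * C * ps (C * exp (real (Suc k) + 1))"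
    using C1 by (intro mult_left_mono) auto
  thus ?thesis unfolding cs_def by (rule max.mono[OF order_refl])
qed
lemma cf_cs: "s \<ge> 1 \<Longrightarrow> cf s = cs (nat \<lfloor>ln s\<rfloor>)"
proof -
  assume "s \<ge> 1"
  hence "ln s \<ge> 0" by (rule ln_ge_zero)
  hence "real (nat \<lfloor>ln s\<rfloor>) = real_of_int \<lfloor>ln s\<rfloor>" by simp
  thus ?thesis by (simp add: cf_def cs_def)
qed

lemma exp_floor: assumes "t \<ge> 1"
  shows "t \<le> exp (real_of_int \<lfloor>ln t\<rfloor> + 1)" "exp (real_of_int \<lfloor>ln t\<rfloor> + 1) \<le> exp 1 * t"
proof -
  have "ln t \<le> real_of_int \<lfloor>ln t\<rfloor> + 1" by linarith
  hence "exp (ln t) \<le> exp (real_of_int \<lfloor>ln t\<rfloor> + 1)" by simp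
  thus "t \<le> exp (real_of_int \<lfloor>ln t\<rfloor> + 1)" using assms by simp
  have "real_of_int \<lfloor>ln t\<rfloor> + 1 \<le> ln t + 1" by linarith
  hence "exp (real_of_int \<lfloor>ln t\<rfloor> + 1) \<le> exp (ln t + 1)" by simp
  thus "exp (real_of_int \<lfloor>ln t\<rfloor> + 1) \<le> exp 1 * t" using assms by (simp add: exp_add mult.commute)
qed

lemma cf_lower: assumes t: "t \<ge> 1" shows "2 * C * \<psi> (C * t) \<le> cf t"
proof -
  have "1 * 1 \<le> C * t" by (rule mult_mono) (use C1 t in auto)
  hence "C * t \<ge> 1" by simp
  have "C * t \<le> C * exp (real_of_int \<lfloor>ln t\<rfloor> + 1)" using exp_floor(1)[OF t] C1 by simp
  hence "\<psi> (C * t) \<le> ps (C * exp (real_of_int \<lfloor>ln t\<rfloor> + 1))"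
    using \<open>C * t \<ge> 1\<close> by (simp add: ps_def psi_mono)
  hence "2 * C * \<psi> (C * t) \<le> 2 * C * ps (C * exp (real_of_int \<lfloor>ln t\<rfloor> + 1))" using C1 by simp
  thus ?thesis by (simp add: cf_def)
qed

lemma Nbound: "eventually (\<lambda>t. N t \<le> cf t * t) at_top"
proof -
  have e1: "eventually (\<lambda>t. \<psi> (2 * C * t * \<psi> (2 * C * t)) / \<psi> t < 3 / 2) at_top"
    using psi_dil2[of "2 * C"] C1 by (intro order_tendstoD) auto
  show ?thesis using e1 eventually_ge_at_top[of 1]
  proof eventually_elim
    case (elim t)
    have t: "t \<ge> 1" using elim by simp
    have Ct: "C * t \<ge> t" using C1 t by simp
    have Ct1: "C * t \<ge> 1" using Ct t by linarith
    have pCt: "\<psi> (C * t) > 0" using Ct1 by (intro psi_pos) simp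
    have pt: "\<psi> t > 0" using t by (intro psi_pos) simp
    define L where "L = 2 * C * t * \<psi> (C * t)"
    have Lp: "L > 0" using C1 t pCt by (simp add: L_def)
    have "N t \<le> max t L"
    proof (rule ccontr)
      assume "\<not> N t \<le> max t L"
      hence NL: "N t > t" "N t > L" by auto
      have Np: "N t > 0" using NL t by simp
      have "N t / t \<le> C * \<psi> (N t)" using Nlow[OF t] FC[OF Np] by linarith
      hence up: "N t \<le> C * t * \<psi> (N t)" using t by (simp add: divide_le_eq mult.commute mult.left_commute)
      have rat: "L * \<psi> (N t) \<le> N t * \<psi> L" using psi_ratio[OF Lp] NL by simp
      have "\<psi> L \<le> \<psi> (2 * C * t * \<psi> (2 * C * t))"
      proof (rule psi_mono)
        show "0 \<le> L" using Lp by simp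
        have "\<psi> (C * t) \<le> \<psi> (2 * C * t)" using Ct1 by (intro psi_mono) auto
        thus "L \<le> 2 * C * t * \<psi> (2 * C * t)" unfolding L_def using C1 t by (intro mult_left_mono) auto
      qed
      also have "\<dots> < 3 / 2 * \<psi> t" using elim pt by (simp add: divide_less_eq mult.commute)
      also have "\<dots> \<le> 3 / 2 * \<psi> (C * t)" using Ct t by (simp add: psi_mono)
      finally have pL: "\<psi> L < 3 / 2 * \<psi> (C * t)" .
      have pN: "\<psi> (N t) > 0" using Np by (rule psi_pos)
      have "L * \<psi> (N t) < N t * (3 / 2 * \<psi> (C * t))"
        using rat pL Np by (smt (verit) mult_strict_left_mono)
      hence "2 * C * t * \<psi> (N t) * \<psi> (C * t) < 3 / 2 * N t * \<psi> (C * t)"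
        by (simp add: L_def algebra_simps)
      hence "2 * C * t * \<psi> (N t) < 3 / 2 * N t" using pCt by simp
      moreover have "C * t * \<psi> (N t) > 0" using C1 t pN by simp
      ultimately show False using up by linarith
    qed
    also have "max t L \<le> cf t * t"
    proof -
      have "t \<le> cf t * t" using cf_ge1[of t] t by simp
      moreover have "L \<le> cf t * t" using cf_lower[OF t] t by (simp add: L_def mult_right_mono mult.commute mult.left_commute)
      ultimately show ?thesis by simp
    qed
    finally show ?case .
  qed
qed

lemma ratio: "((\<lambda>t. ps (cf t * t) / ps t) \<longlongrightarrow> 1) at_top"
proof -
  define K where "K = 2 * C * exp 1"
  have K1: "K \<ge> 1"
  proof -
    have "1 * 1 \<le> (2 * C) * exp 1" by (rule mult_mono) (use C1 in auto)
    thus ?thesis by (simp add: K_def)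
  qed
  show ?thesis
  proof (rule tendsto_sandwich[OF _ _ tendsto_const psi_dil2[OF K1]])
    show "\<forall>\<^sub>F t in at_top. 1 \<le> ps (cf t * t) / ps t"
      using eventually_ge_at_top[of 1]
    proof eventually_elim
      case (elim t)
      have "ps t \<le> ps (cf t * t)" using cf_ge1[of t] elim by (intro ps_mono) simp
      thus ?case using ps_pos[of t] by simp
    qed
    show "\<forall>\<^sub>F t in at_top. ps (cf t * t) / ps t \<le> \<psi> (K * t * \<psi> (K * t)) / \<psi> t"
      using eventually_ge_at_top[of 1] filterlim_compose[OF top lin_top[of K]] K1
    proof -
      have "eventually (\<lambda>t. \<psi> (K * t) \<ge> 1) at_top"
        using filterlim_compose[OF top lin_top[of K]] K1 by (simp add: filterlim_at_top)
      thus ?thesis using eventually_ge_at_top[of 1]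
      proof eventually_elim
        case (elim t)
        have t: "t \<ge> 1" using elim by simp
        have Ce: "C * exp 1 * t \<ge> 1"
        proof -
          have "1 * 1 \<le> C * exp 1" by (rule mult_mono) (use C1 in auto)
          hence "1 * 1 \<le> (C * exp 1) * t" by (intro mult_mono) (use t in auto)
          thus ?thesis by simp
        qed
        have "ps (C * exp (real_of_int \<lfloor>ln t\<rfloor> + 1)) \<le> ps (C * exp 1 * t)"
          using exp_floor(2)[OF t] C1 by (intro ps_mono) (simp add: mult.assoc)
        also have "\<dots> = \<psi> (C * exp 1 * t)" using Ce by (simp add: ps_eq)
        also have "\<dots> \<le> \<psi> (K * t)" using Ce C1 t by (intro psi_mono) (auto simp: K_def)
        finally have a: "ps (C * exp (real_of_int \<lfloor>ln t\<rfloor> + 1)) \<le> \<psi> (K * t)" .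
        have "2 * C * ps (C * exp (real_of_int \<lfloor>ln t\<rfloor> + 1)) \<le> 2 * C * \<psi> (K * t)"
          using a C1 by (intro mult_left_mono) auto
        also have "\<dots> \<le> K * \<psi> (K * t)"
          using elim C1 unfolding K_def by (intro mult_right_mono) auto
        finally have b: "2 * C * ps (C * exp (real_of_int \<lfloor>ln t\<rfloor> + 1)) \<le> K * \<psi> (K * t)" .
        have c: "1 \<le> K * \<psi> (K * t)"
        proof -
          have "1 * 1 \<le> K * \<psi> (K * t)" by (rule mult_mono) (use K1 elim in auto)
          thus ?thesis by simp
        qed
        have cfK: "cf t \<le> K * \<psi> (K * t)" using b c by (simp add: cf_def)
        have ct1: "cf t * t \<ge> 1" using cf_ge1[of t] t
          by (metis mult_mono' mult_1_right order_trans zero_le_one)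
        have "ps (cf t * t) = \<psi> (cf t * t)" using ct1 by (simp add: ps_eq)
        also have "\<dots> \<le> \<psi> (K * t * \<psi> (K * t))"
          using ct1 cfK t by (intro psi_mono) (auto simp: mult.commute mult.left_commute mult_right_mono)
        finally have "ps (cf t * t) \<le> \<psi> (K * t * \<psi> (K * t))" .
        thus ?case using t ps_eq[OF t] psi_pos[of t] by (simp add: divide_right_mono)
      qed
    qed
  qed
qed

lemma kk2_nonneg: "0 \<le> kk2 t" by (simp add: kk2_def)

lemma kk2_lim: "(kk2 \<longlongrightarrow> 0) at_top"
proof (rule tendsto_sandwich[OF _ _ tendsto_const])
  show "\<forall>\<^sub>F t in at_top. 0 \<le> kk2 t" by (simp add: kk2_nonneg)
  show "((\<lambda>t. C * (ps (cf t * t) / ps t - 1)) \<longlongrightarrow> 0) at_top"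
    using tendsto_mult[OF tendsto_const tendsto_diff[OF ratio tendsto_const], of C 1] by simp
  show "\<forall>\<^sub>F t in at_top. kk2 t \<le> C * (ps (cf t * t) / ps t - 1)"
    using Nbound eventually_ge_at_top[of 1]
  proof eventually_elim
    case (elim t)
    have r1: "ps (cf t * t) / ps t \<ge> 1"
    proof -
      have "ps t \<le> ps (cf t * t)" using cf_ge1[of t] elim by (intro ps_mono) simp
      thus ?thesis using ps_pos[of t] by simp
    qed
    have "gg t \<le> F (cf t * t) / ps t" using Fmono[of "N t" "cf t * t"] elim ps_pos[of t]
      by (simp add: gg_def divide_right_mono)
    also have "\<dots> = ff (cf t * t) * (ps (cf t * t) / ps t)" using ps_pos[of "cf t * t"] by (simp add: ff_def)
    finally have "gg t - ff (cf t * t) \<le> ff (cf t * t) * (ps (cf t * t) / ps t - 1)"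
      by (simp add: algebra_simps)
    also have "\<dots> \<le> C * (ps (cf t * t) / ps t - 1)" using r1 ff_bd by (intro mult_right_mono) auto
    finally show ?case using r1 C1 by (simp add: kk2_def)
  qed
qed

lemma gg_bd: obtains Bg where "Bg \<ge> 0" "\<And>t. t \<ge> 1 \<Longrightarrow> gg t \<le> Bg"
proof -
  have "eventually (\<lambda>t. ps (cf t * t) / ps t < 2) at_top" using ratio by (rule order_tendstoD) simp
  hence "eventually (\<lambda>t. ps (cf t * t) / ps t < 2 \<and> N t \<le> cf t * t) at_top"
    using Nbound by (rule eventually_conj)
  then obtain T0 where T0: "\<And>t. t \<ge> T0 \<Longrightarrow> ps (cf t * t) / ps t < 2 \<and> N t \<le> cf t * t"
    by (auto simp: eventually_at_top_linorder)
  define T1 where "T1 = max 1 T0"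
  define Bg where "Bg = max (2 * C) (F (N T1) / ps 1)"
  show ?thesis
  proof (rule that[of Bg])
    show "Bg \<ge> 0" using C1 by (simp add: Bg_def)
    fix t :: real assume t: "t \<ge> 1"
    show "gg t \<le> Bg"
    proof (cases "t \<ge> T1")
      case True
      hence h: "ps (cf t * t) / ps t < 2" "N t \<le> cf t * t" using T0[of t] by (auto simp: T1_def)
      have "gg t \<le> F (cf t * t) / ps t" using Fmono[OF h(2)] ps_pos[of t]
        by (simp add: gg_def divide_right_mono)
      also have "\<dots> = ff (cf t * t) * (ps (cf t * t) / ps t)" using ps_pos[of "cf t * t"] by (simp add: ff_def)
      also have "\<dots> \<le> C * 2" using ff_bd[of "cf t * t"] h(1) ps_pos
        by (intro mult_mono) (auto simp: less_imp_le)
      finally show ?thesis by (simp add: Bg_def)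
    next
      case False
      have "F (N t) \<le> F (N T1)" using False t by (intro Fmono Nmono) auto
      moreover have "ps 1 \<le> ps t" using t by (rule ps_mono)
      ultimately have "F (N t) / ps t \<le> F (N T1) / ps 1"
        using ps_pos F0 by (intro frac_le) auto
      thus ?thesis by (simp add: gg_def Bg_def)
    qed
  qed
qed

lemma kk1_bd: "t \<ge> 1 \<Longrightarrow> 0 \<le> kk1 t \<and> kk1 t \<le> 1 / \<psi> 1"
  using ps_mono[of 1 t] ps_pos[of 1] ps_pos[of t] by (auto simp: kk1_def ps_def frac_le)

lemma kk1_lim: "(kk1 \<longlongrightarrow> 0) at_top"
proof -
  have "filterlim ps at_top at_top"
  proof (rule filterlim_at_top_mono[OF top])
    show "\<forall>\<^sub>F x in at_top. \<psi> x \<le> ps x" using eventually_ge_at_top[of 1] by eventually_elim (simp add: ps_eq)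
  qed
  hence "((\<lambda>t. inverse (ps t)) \<longlongrightarrow> 0) at_top" by (rule tendsto_inverse_0_at_top)
  thus ?thesis by (simp add: kk1_def[abs_def] divide_inverse)
qed

lemma lower: "t \<ge> 1 \<Longrightarrow> ff t \<le> gg t + kk1 t"
proof -
  assume t: "t \<ge> 1"
  have "max 0 (t - N t) / t \<le> 1" using Nnn[OF t] t by (auto simp: divide_le_eq)
  hence "F t \<le> F (N t) + 1" using Nup[OF t] by linarith
  hence "F t / ps t \<le> (F (N t) + 1) / ps t" using ps_pos[of t] by (intro divide_right_mono) auto
  thus ?thesis by (simp add: ff_def gg_def kk1_def add_divide_distrib)
qed

lemma upper: "gg t \<le> ff (cf t * t) + kk2 t" by (simp add: kk2_def)

end


lemma Jfin:
  assumes "h \<in> borel_measurable borel" "1 \<le> T" "\<And>s. 1 \<le> s \<Longrightarrow> s \<le> T \<Longrightarrow> 0 \<le> h s \<and> h s \<le> M"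
  shows "J h T = ennreal (enn2real (J h T))"
  using J_fin_eq(2)[OF assms] by simp

lemma ennreal_le3: "0 \<le> b \<Longrightarrow> 0 \<le> c \<Longrightarrow> 0 \<le> d \<Longrightarrow> ennreal a \<le> ennreal b + ennreal c + ennreal d \<Longrightarrow> a \<le> b + c + d"
  by (metis add_nonneg_nonneg ennreal_le_iff ennreal_plus)

context an_loc begin

lemma lnpsi_lim: "((\<lambda>T. ln (\<psi> (C * exp 1 * T)) / ln T) \<longlongrightarrow> 0) at_top"
proof -
  define c where "c = C * exp 1"
  have c: "c > 0" using C1 by (simp add: c_def)
  have a: "((\<lambda>T. ln (\<psi> (c * T)) / ln (c * T)) \<longlongrightarrow> 0) at_top"
    using filterlim_compose[OF psi_log lin_top[OF c]] .
  have b: "((\<lambda>T. ln c / ln T + 1) \<longlongrightarrow> 0 + 1) at_top"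
    by (intro tendsto_add tendsto_const tendsto_divide_0[OF tendsto_const]
        filterlim_at_top_imp_at_infinity[OF ln_at_top])
  have "((\<lambda>T. (ln (\<psi> (c * T)) / ln (c * T)) * (ln c / ln T + 1)) \<longlongrightarrow> 0 * (0 + 1)) at_top"
    by (rule tendsto_mult[OF a b])
  hence l: "((\<lambda>T. (ln (\<psi> (c * T)) / ln (c * T)) * (ln c / ln T + 1)) \<longlongrightarrow> 0) at_top" by simp
  have ev: "eventually (\<lambda>T. (ln (\<psi> (c * T)) / ln (c * T)) * (ln c / ln T + 1) = ln (\<psi> (c * T)) / ln T) at_top"
  proof -
    have "eventually (\<lambda>T. ln (c * T) > 0) at_top"
      using filterlim_compose[OF ln_at_top lin_top[OF c]] by (simp add: filterlim_at_top_dense)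
    thus ?thesis using eventually_gt_at_top[of 1]
    proof eventually_elim
      case (elim T)
      have l: "ln (c * T) = ln c + ln T" using c elim by (simp add: ln_mult)
      have lT: "ln T > 0" using elim by simp
      have e1: "ln c / ln T + 1 = ln (c * T) / ln T" using l lT by (simp add: field_simps)
      have "(ln (\<psi> (c * T)) / ln (c * T)) * (ln (c * T) / ln T) = ln (\<psi> (c * T)) / ln T"
        using elim lT by simp
      thus ?case by (simp only: e1)
    qed
  qed
  show ?thesis using Lim_transform_eventually[OF l ev] by (simp add: c_def)
qed

lemma third_lim: "((\<lambda>T. C * (ln (cs (nat \<lfloor>ln T\<rfloor>)) + 1) / ln T) \<longlongrightarrow> 0) at_top"
proof (rule Lim_null_comparison)
  let ?g = "\<lambda>T. C * ((ln (2 * C) + 1) / ln T + ln (\<psi> (C * exp 1 * T)) / ln T)"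
  show "(?g \<longlongrightarrow> 0) at_top"
    using tendsto_mult[OF tendsto_const tendsto_add[OF tendsto_divide_0[OF tendsto_const
        filterlim_at_top_imp_at_infinity[OF ln_at_top]] lnpsi_lim], of C "ln (2 * C) + 1"] by simp
  have ce: "C * exp 1 > 0" using C1 by simp
  have "eventually (\<lambda>T. \<psi> (C * exp 1 * T) \<ge> 1) at_top"
    using filterlim_compose[OF top lin_top[OF ce]] by (simp add: filterlim_at_top)
  thus "\<forall>\<^sub>F T in at_top. norm (C * (ln (cs (nat \<lfloor>ln T\<rfloor>)) + 1) / ln T) \<le> ?g T"
    using eventually_gt_at_top[of 1]
  proof eventually_elim
    case (elim T)
    have T: "T \<ge> 1" "ln T > 0" using elim by auto
    define K where "K = nat \<lfloor>ln T\<rfloor>"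
    have "ln T \<ge> 0" using T by simp
    hence RK: "real K = real_of_int \<lfloor>ln T\<rfloor>" by (simp add: K_def)
    have Ce1: "C * exp 1 * T \<ge> 1"
    proof -
      have "1 * 1 \<le> C * exp 1" by (rule mult_mono) (use C1 in auto)
      hence "1 * 1 \<le> (C * exp 1) * T" by (intro mult_mono) (use T in auto)
      thus ?thesis by simp
    qed
    have "ps (C * exp (real K + 1)) \<le> ps (C * exp 1 * T)"
      using exp_floor(2)[OF T(1)] C1 RK by (intro ps_mono) (simp add: mult.assoc)
    also have "\<dots> = \<psi> (C * exp 1 * T)" using Ce1 by (simp add: ps_eq)
    finally have p: "ps (C * exp (real K + 1)) \<le> \<psi> (C * exp 1 * T)" .
    have two: "1 \<le> 2 * C * \<psi> (C * exp 1 * T)"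
    proof -
      have "1 * 1 \<le> (2 * C) * \<psi> (C * exp 1 * T)" by (rule mult_mono) (use C1 elim in auto)
      thus ?thesis by simp
    qed
    have csK: "cs K \<le> 2 * C * \<psi> (C * exp 1 * T)"
      unfolding cs_def using p two C1 by (auto intro!: mult_left_mono)
    have lcs: "0 \<le> ln (cs K)" using cs_ge1[of K] by simp
    have "ln (cs K) \<le> ln (2 * C * \<psi> (C * exp 1 * T))"
      using csK cs_ge1[of K] by (subst ln_le_cancel_iff) auto
    also have "\<dots> = ln (2 * C) + ln (\<psi> (C * exp 1 * T))"
      using C1 elim by (subst ln_mult) auto
    finally have lcs2: "ln (cs K) \<le> ln (2 * C) + ln (\<psi> (C * exp 1 * T))" .
    have "norm (C * (ln (cs K) + 1) / ln T) = C * (ln (cs K) + 1) / ln T"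
      using lcs C1 T by simp
    also have "\<dots> \<le> C * (ln (2 * C) + ln (\<psi> (C * exp 1 * T)) + 1) / ln T"
      using lcs2 C1 T by (intro divide_right_mono mult_left_mono) auto
    also have "\<dots> = ?g T" using T by (simp add: field_simps)
    finally show ?case by (simp add: K_def)
  qed
qed

lemma main: "((\<lambda>T. (enn2real (J gg T) - enn2real (J ff T)) / ln T) \<longlongrightarrow> 0) at_top"
proof -
  obtain Bg where Bg: "Bg \<ge> 0" "\<And>t. t \<ge> 1 \<Longrightarrow> gg t \<le> Bg" using gg_bd by blast
  have kk2b: "0 \<le> kk2 s \<and> kk2 s \<le> Bg" if "s \<ge> 1" for s
    using Bg(2)[OF that] ff_bd[of "cf s * s"] gg_nonneg[of s] Bg(1) by (auto simp: kk2_def)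
  have l1: "((\<lambda>T. enn2real (J kk1 T) / ln T) \<longlongrightarrow> 0) at_top"
    by (rule Ces[OF kk1_meas kk1_bd kk1_lim])
  have l2: "((\<lambda>T. enn2real (J kk2 T) / ln T) \<longlongrightarrow> 0) at_top"
    by (rule Ces[OF kk2_meas kk2b kk2_lim])
  let ?g = "\<lambda>T. enn2real (J kk1 T) / ln T + enn2real (J kk2 T) / ln T + C * (ln (cs (nat \<lfloor>ln T\<rfloor>)) + 1) / ln T"
  show ?thesis
  proof (rule Lim_null_comparison)
    show "(?g \<longlongrightarrow> 0) at_top" using tendsto_add[OF tendsto_add[OF l1 l2] third_lim] by simp
    show "\<forall>\<^sub>F T in at_top. norm ((enn2real (J gg T) - enn2real (J ff T)) / ln T) \<le> ?g T"
      using eventually_gt_at_top[of 1]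
    proof eventually_elim
      case (elim T)
      have T: "T \<ge> 1" "ln T > 0" using elim by auto
      let ?K = "nat \<lfloor>ln T\<rfloor>"
      have eff: "J ff T = ennreal (enn2real (J ff T))" by (rule Jfin[OF ff_meas T(1)]) (use ff_bd in auto)
      have egg: "J gg T = ennreal (enn2real (J gg T))" by (rule Jfin[OF gg_meas T(1)]) (use gg_nonneg Bg in auto)
      have ek1: "J kk1 T = ennreal (enn2real (J kk1 T))" by (rule Jfin[OF kk1_meas T(1)]) (use kk1_bd in auto)
      have ek2: "J kk2 T = ennreal (enn2real (J kk2 T))" by (rule Jfin[OF kk2_meas T(1)]) (use kk2b in auto)
      have a: "J ff T \<le> J gg T + J kk1 T + 0"
      proof -
        have "J ff T \<le> J (\<lambda>s. gg s + kk1 s) T" by (rule J_mono) (use lower in auto)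
        also have "\<dots> = J gg T + J kk1 T"
          by (rule J_add) (use gg_nonneg kk1_bd in auto)
        finally show ?thesis by simp
      qed
      have b: "J gg T \<le> J ff T + ennreal (C * (ln (cs ?K) + 1)) + J kk2 T"
      proof -
        have "J gg T \<le> J (\<lambda>s. ff (cf s * s) + kk2 s) T" by (rule J_mono) (use upper in auto)
        also have "\<dots> = J (\<lambda>s. ff (cf s * s)) T + J kk2 T"
          by (rule J_add) (use ff_bd kk2_nonneg in auto)
        also have "J (\<lambda>s. ff (cf s * s)) T = J (\<lambda>s. ff (cs (nat \<lfloor>ln s\<rfloor>) * s)) T"
          by (intro antisym J_mono) (auto simp: cf_cs)
        also have "\<dots> \<le> J ff T + ennreal (C * (ln (cs ?K) + 1))"
          by (rule block[where fb=ff and cs=cs and C=C and T=T, OF ff_meas _ cs_ge1 cs_mono T(1)]) (use ff_bd in auto)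
        finally show ?thesis by (simp add: add_right_mono)
      qed
      have lcs: "0 \<le> C * (ln (cs ?K) + 1)" using cs_ge1[of ?K] C1 by simp
      have a': "enn2real (J ff T) \<le> enn2real (J gg T) + enn2real (J kk1 T) + 0"
        by (rule ennreal_le3) (use a eff egg ek1 in auto)
      have b': "enn2real (J gg T) \<le> enn2real (J ff T) + C * (ln (cs ?K) + 1) + enn2real (J kk2 T)"
        by (rule ennreal_le3) (use b eff egg ek2 lcs in auto)
      have "\<bar>enn2real (J gg T) - enn2real (J ff T)\<bar> \<le> enn2real (J kk1 T) + enn2real (J kk2 T) + C * (ln (cs ?K) + 1)"
        using a' b' enn2real_nonneg[of "J kk1 T"] enn2real_nonneg[of "J kk2 T"] lcs by linarith
      hence "\<bar>enn2real (J gg T) - enn2real (J ff T)\<bar> / ln T \<le> (enn2real (J kk1 T) + enn2real (J kk2 T) + C * (ln (cs ?K) + 1)) / ln T"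
        using T by (intro divide_right_mono) auto
      thus ?case using T by (simp add: add_divide_distrib)
    qed
  qed
qed

end


lemma Mop_cong: "(\<And>s. 1 \<le> s \<Longrightarrow> h1 s = h2 s) \<Longrightarrow> Mop h1 = Mop h2"
  unfolding Mop_def by (intro ext if_cong refl arg_cong2[where f="(/)"] set_lebesgue_integral_cong) auto

lemma Mop_J:
  assumes hm: "h \<in> borel_measurable borel" and hb: "\<And>s. 1 \<le> s \<Longrightarrow> 0 \<le> h s \<and> h s \<le> M" and T: "T > 1"
  shows "Mop h T = enn2real (J h T) / ln T"
proof -
  have "J h T = ennreal (LBINT s:{1..T}. h s / s)" by (rule J_fin_eq(2)[OF hm]) (use T hb in auto)
  moreover have "0 \<le> (LBINT s:{1..T}. h s / s)"
    unfolding set_lebesgue_integral_def using hb by (intro integral_nonneg_AE) (auto split: split_indicator)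
  ultimately show ?thesis using T by (simp add: Mop_def)
qed

lemma Mop_bd:
  assumes hm: "h \<in> borel_measurable borel" and hb: "\<And>s. 1 \<le> s \<Longrightarrow> 0 \<le> h s \<and> h s \<le> M"
  shows "\<bar>Mop h T\<bar> \<le> M"
proof -
  have M: "M \<ge> 0" using hb[of 1] by simp
  show ?thesis
  proof (cases "T > 1")
    case False thus ?thesis using M by (simp add: Mop_def)
  next
    case True
    have "J h T \<le> J (\<lambda>_. M) T" by (rule J_mono) (use hb in auto)
    also have "\<dots> = ennreal (M * ln T)" using M True by (intro J_const) auto
    finally have "enn2real (J h T) \<le> M * ln T" using M True by (simp add: enn2real_leI)
    hence "enn2real (J h T) / ln T \<le> M" using True by (simp add: divide_le_eq)
    moreover have "0 \<le> enn2real (J h T) / ln T" using True by simp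
    ultimately show ?thesis using Mop_J[OF hm hb True] by simp
  qed
qed

lemma Mop_meas:
  assumes hm[measurable]: "h \<in> borel_measurable borel"
  shows "Mop h \<in> borel_measurable lborel"
proof -
  have "(\<lambda>(t, s). indicator {1..t} s *\<^sub>R (h s / s)) \<in> borel_measurable (lborel \<Otimes>\<^sub>M lborel)"
  proof -
    have "(\<lambda>(t, s). indicator {1..t} s *\<^sub>R (h s / s)) = (\<lambda>p. (if 1 \<le> snd p \<and> snd p \<le> fst p then 1 else 0) * (h (snd p) / snd p))"
      by (auto simp: fun_eq_iff split: split_indicator)
    also have "\<dots> \<in> borel_measurable (lborel \<Otimes>\<^sub>M lborel)" by measurable
    finally show ?thesis .
  qed
  hence i: "(\<lambda>t. LINT s|lborel. indicator {1..t} s *\<^sub>R (h s / s)) \<in> borel_measurable lborel"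
    by (rule lborel.borel_measurable_lebesgue_integral)
  have "Mop h = (\<lambda>t. if 1 < t then (LINT s|lborel. indicator {1..t} s *\<^sub>R (h s / s)) / ln t else 0)"
    by (rule ext) (simp add: Mop_def set_lebesgue_integral_def)
  also have "\<dots> \<in> borel_measurable lborel" using i by measurable
  finally show ?thesis .
qed

lemma LinfI: "y \<in> borel_measurable lborel \<Longrightarrow> (\<And>t. \<bar>y t\<bar> \<le> M) \<Longrightarrow> y \<in> Linf"
  unfolding Linf_def by (auto intro!: exI[of _ M])

context x_loc begin

definition NN where "NN t = nr (1 / max 1 t)"

lemma NN_mono: "a \<le> b \<Longrightarrow> NN a \<le> NN b"
  unfolding NN_def by (rule nr_anti) (auto simp: frac_le)

lemma an: "an_loc \<psi> F NN C0"
proof (unfold_locales)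
  show "1 \<le> C0" by (rule C0)
  show "\<And>a b. a \<le> b \<Longrightarrow> F a \<le> F b" by (rule F_mono)
  show "\<And>t. 0 \<le> F t" by simp
  show "\<And>t. t > 0 \<Longrightarrow> F t \<le> C0 * \<psi> t" by (rule C0)
  show "\<And>t. 1 \<le> t \<Longrightarrow> 0 \<le> NN t" by (simp add: NN_def nr_nonneg)
  show "\<And>a b. 1 \<le> a \<Longrightarrow> a \<le> b \<Longrightarrow> NN a \<le> NN b" by (rule NN_mono)
  show "NN t / t \<le> F (NN t)" if t: "1 \<le> t" for t
    using F_low[of "1 / t"] t by (simp add: NN_def max_def)
  show "F t \<le> F (NN t) + max 0 (t - NN t) / t" if t: "1 \<le> t" for t
    using F_up[of "1 / t" t] t by (simp add: NN_def max_def)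
  show "F \<in> borel_measurable borel" by (rule F_meas)
  show "NN \<in> borel_measurable borel" by (rule borel_measurable_mono) (auto simp: mono_def NN_mono)
qed

end

theorem theorem2p7:
  fixes \<psi> :: "real \<Rightarrow> real" and \<gamma> :: "(real \<Rightarrow> real) \<Rightarrow> real" and x :: "real \<Rightarrow> real"
  assumes "\<psi> \<in> Psi_class"
    and "((\<lambda>t. \<psi> (t * \<psi> t) / \<psi> t) \<longlongrightarrow> 1) at_top"
    and "gen_limit \<gamma>"
    and "x \<in> M_psi \<psi>"
    and "\<forall>s>0. 0 \<le> x s"
  shows "CD_trace (\<gamma> \<circ> Mop) \<psi> x =
         (\<gamma> \<circ> Mop) (\<lambda>t. stieltjes_tail x (1 / t) / \<psi> t)"
proof -
  interpret x_loc \<psi> x by unfold_locales (use assms in auto)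
  interpret an_loc \<psi> F NN C0 by (rule an)
  have e1: "Mop (\<lambda>t. (LBINT s:{0..t}. rearr x s) / \<psi> t) = Mop ff"
    by (rule Mop_cong) (simp add: ff_def F_def ps_eq)
  have e2: "Mop (\<lambda>t. stieltjes_tail x (1 / t) / \<psi> t) = Mop gg"
  proof (rule Mop_cong)
    fix s :: real assume s: "1 \<le> s"
    have "stieltjes_tail x (1 / s) = F (nr (1 / s))" using s by (intro stieltjes) simp
    thus "stieltjes_tail x (1 / s) / \<psi> s = gg s" using s by (simp add: gg_def NN_def ps_eq max_def)
  qed
  obtain Bg where Bg: "Bg \<ge> 0" "\<And>t. t \<ge> 1 \<Longrightarrow> gg t \<le> Bg" using gg_bd by blast
  have ffb: "\<And>s. 1 \<le> s \<Longrightarrow> 0 \<le> ff s \<and> ff s \<le> C0" using ff_bd by auto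
  have ggb: "\<And>s. 1 \<le> s \<Longrightarrow> 0 \<le> gg s \<and> gg s \<le> Bg" using gg_nonneg Bg by auto
  have Lf: "Mop ff \<in> Linf" by (rule LinfI[OF Mop_meas[OF ff_meas] Mop_bd[OF ff_meas ffb]])
  have Lg: "Mop gg \<in> Linf" by (rule LinfI[OF Mop_meas[OF gg_meas] Mop_bd[OF gg_meas ggb]])
  have Ld: "(\<lambda>t. 1 * Mop ff t + (-1) * Mop gg t) \<in> Linf"
  proof (rule LinfI)
    show "(\<lambda>t. 1 * Mop ff t + (-1) * Mop gg t) \<in> borel_measurable lborel"
      using Mop_meas[OF ff_meas] Mop_meas[OF gg_meas] by measurable
    show "\<bar>1 * Mop ff t + (-1) * Mop gg t\<bar> \<le> C0 + Bg" for t
      using Mop_bd[OF ff_meas ffb, of t] Mop_bd[OF gg_meas ggb, of t] by linarith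
  qed
  have lim: "((\<lambda>t. 1 * Mop ff t + (-1) * Mop gg t) \<longlongrightarrow> 0) at_top"
  proof -
    have l: "((\<lambda>T. - ((enn2real (J gg T) - enn2real (J ff T)) / ln T)) \<longlongrightarrow> - 0) at_top"
      by (rule tendsto_minus[OF main])
    have ev: "eventually (\<lambda>T. - ((enn2real (J gg T) - enn2real (J ff T)) / ln T) = 1 * Mop ff T + (-1) * Mop gg T) at_top"
      using eventually_gt_at_top[of 1]
    proof eventually_elim
      case (elim T)
      show ?case using Mop_J[OF ff_meas ffb elim] Mop_J[OF gg_meas ggb elim] by (simp add: diff_divide_distrib)
    qed
    show ?thesis using Lim_transform_eventually[OF l ev] by simp
  qed
  have g: "gen_limit \<gamma>" by (rule assms(3))
  have "\<gamma> (\<lambda>t. 1 * Mop ff t + (-1) * Mop gg t) = 1 * \<gamma> (Mop ff) + (-1) * \<gamma> (Mop gg)"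
    using g Lf Lg unfolding gen_limit_def by blast
  moreover have "\<gamma> (\<lambda>t. 1 * Mop ff t + (-1) * Mop gg t) = 0"
    using g Ld lim unfolding gen_limit_def by blast
  ultimately have "\<gamma> (Mop ff) = \<gamma> (Mop gg)" by simp
  thus ?thesis by (simp add: CD_trace_def e1 e2)
qed



end
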